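(* Let $p$ be an odd prime and $h$ a homeomorphism of the Kirch space $(\mathbb{N},\tau_K)$. (1) If $p$ is a Fermat prime or a Mersenne prime, then $h(p)=p$. (2) If $p$ is neither a Fermat prime nor a Mersenne prime, then $h[p^{\mathbb{N}}]=p^{\mathbb{N}}$, where $p^{\mathbb{N}}=\{p^n:n\in\mathbb{N}\}$.
   Context: $\mathbb{N}=\{1,2,\dots\}$, $\mathbb{N}_0=\{0\}\cup\mathbb{N}$. The Kirch topology $\tau_K$ on $\mathbb{N}$ is generated by the base of all $a+b\mathbb{N}_0=\{a+bn:n\in\mathbb{N}_0\}$ with $a,b\in\mathbb{N}$ coprime and $b$ square-free. A prime $p$ is a Fermat prime if $p=2^n+1$ for some $n\in\mathbb{N}$ and a Mersenne prime if $p=2^n-1$ for some $n\in\mathbb{N}$. $h[A]=\{h(a):a\in A\}$. *)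

theory Defs
  imports "HOL-Analysis.Analysis" "HOL-Computational_Algebra.Squarefree"
begin

definition arith_prog :: "nat \<Rightarrow> nat \<Rightarrow> nat set" where
  "arith_prog a b = {a + b * n | n. True}"

definition kirch_base :: "nat set set" where
  "kirch_base = {arith_prog a b | a b. a \<ge> 1 \<and> b \<ge> 1 \<and> coprime a b \<and> squarefree b}"

text \<open>The Kirch topology; its carrier is {1,2,...} (the union of the base).\<close>
definition kirch_topology :: "nat topology" where
  "kirch_topology = topology_generated_by kirch_base"

definition fermat_prime :: "nat \<Rightarrow> bool" where
  "fermat_prime p \<longleftrightarrow> prime p \<and> (\<exists>n\<ge>1. p = 2 ^ n + 1)"

definition mersenne_prime :: "nat \<Rightarrow> bool" where
  "mersenne_prime p \<longleftrightarrow> prime p \<and> (\<exists>n\<ge>1. p = 2 ^ n - 1)"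

end

theory Submission
  imports Defs
begin


abbreviation KT where "KT \<equiv> kirch_topology"

definition basic :: "nat \<Rightarrow> nat \<Rightarrow> bool" where
  "basic a b \<longleftrightarrow> a \<ge> 1 \<and> b \<ge> 1 \<and> coprime a b \<and> squarefree b"

lemma ap_mem:
  assumes "b > 0"
  shows "x \<in> arith_prog a b \<longleftrightarrow> a \<le> x \<and> x mod b = a mod b"
proof
  assume "x \<in> arith_prog a b"
  then obtain n where "x = a + b * n" by (auto simp: arith_prog_def)
  then show "a \<le> x \<and> x mod b = a mod b" by simp
next
  assume h: "a \<le> x \<and> x mod b = a mod b"
  then have "b dvd x - a" using mod_eq_dvd_iff_nat by metis
  then obtain n where "x - a = b * n" by (auto elim: dvdE)
  then have "x = a + b * n" using h by (metis le_add_diff_inverse)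
  then show "x \<in> arith_prog a b" by (auto simp: arith_prog_def)
qed

lemma sqf_dvd_int:
  fixes b :: nat and n :: int
  assumes "squarefree b" "\<And>p. prime p \<Longrightarrow> p dvd b \<Longrightarrow> int p dvd n"
  shows "int b dvd n"
  using assms
proof (induction b rule: less_induct)
  case (less b)
  show ?case
  proof (cases "b = 1")
    case True then show ?thesis by simp
  next
    case False
    then obtain p where p: "prime p" "p dvd b" using prime_factor_nat by blast
    then obtain b' where b': "b = p * b'" by (auto elim: dvdE)
    have b0: "b \<noteq> 0" by (metis less.prems(1) not_squarefree_0)
    then have "b' \<noteq> 0" using b' by auto
    have "p > 1" using p prime_gt_1_nat by blast
    then have "b' < b" using b' \<open>b' \<noteq> 0\<close> by simp
    have sb': "squarefree b'" using less.prems(1) b' squarefree_mono by (metis dvd_triv_right)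
    have "int b' dvd n"
    proof (rule less.IH[OF \<open>b' < b\<close> sb'])
      fix p' assume "prime p'" "p' dvd b'"
      then show "int p' dvd n" using less.prems(2) b' by (metis dvd_mult)
    qed
    moreover have "int p dvd n" using less.prems(2) p by blast
    moreover have "\<not> p dvd b'"
    proof
      assume "p dvd b'"
      then have "p\<^sup>2 dvd b" using b' by (simp add: power2_eq_square)
      then have "p dvd 1" using squarefreeD less.prems(1) by blast
      then show False using p by simp
    qed
    then have "coprime p b'" using p prime_imp_coprime by blast
    then have "coprime (int p) (int b')" by simp
    ultimately have "int p * int b' dvd n" using divides_mult by blast
    then show ?thesis using b' by simp
  qed
qed

lemma mod_eq_int_dvd: "(x::nat) mod p = y mod p \<longleftrightarrow> int p dvd int x - int y"
  by (metis mod_eq_dvd_iff of_nat_eq_iff zmod_int)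

lemma sqf_mod:
  fixes b :: nat
  assumes "squarefree b" "\<And>p. prime p \<Longrightarrow> p dvd b \<Longrightarrow> x mod p = y mod p"
  shows "x mod b = y mod b"
  using sqf_dvd_int[OF assms(1), of "int x - int y"] assms(2) mod_eq_int_dvd by blast

lemma crt:
  fixes P :: "nat set" and B :: nat and f :: "nat \<Rightarrow> nat"
  assumes "finite P" "\<forall>p\<in>P. prime p"
  shows "\<exists>z\<ge>B. \<forall>p\<in>P. z mod p = f p mod p"
  using assms
proof (induction P rule: finite_induct)
  case empty have "B \<ge> B" by simp
  then show ?case by blast
next
  case (insert q P)
  then obtain z0 where z0: "z0 \<ge> B" "\<forall>p\<in>P. z0 mod p = f p mod p" by auto
  define M where "M = prod id P"
  have pq: "prime q" using insert by auto
  have "coprime q M" unfolding M_def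
    by (rule prod_coprime_right) (use insert in \<open>auto intro: primes_coprime\<close>)
  then have cop: "coprime M q" by (simp add: coprime_commute)
  have "M \<noteq> 0" unfolding M_def using insert by (auto simp: prime_gt_0_nat)
  moreover have "q \<noteq> 0" using pq by auto
  ultimately obtain x q1 q2 where x: "x = z0 + q1 * M" "x = f q + q2 * q"
    using chinese_remainder[OF cop] by blast
  have "\<forall>p\<in>P. x mod p = f p mod p"
  proof
    fix p assume "p \<in> P"
    then have "p dvd M" unfolding M_def using insert(1) by (metis dvd_prodI id_apply)
    then obtain k where "M = p * k" by (auto elim: dvdE)
    then have "x = z0 + p * (q1 * k)" using x(1) by simp
    then have "x mod p = z0 mod p" by simp
    then show "x mod p = f p mod p" using z0 \<open>p \<in> P\<close> by simp
  qed
  moreover have "x mod q = f q mod q" using x(2) by simp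
  moreover have "x \<ge> B" using x(1) z0 by simp
  ultimately show ?case by auto
qed

lemma basic_pos: "basic a b \<Longrightarrow> b > 0" by (auto simp: basic_def)

lemma ap_ge: "x \<in> arith_prog a b \<Longrightarrow> a \<le> x" by (auto simp: arith_prog_def)

lemma ap_self: "a \<in> arith_prog a b" by (auto simp: arith_prog_def intro: exI[of _ 0])

lemma ap_coprime:
  assumes "basic a b" "x \<in> arith_prog a b"
  shows "coprime x b"
proof -
  have "x mod b = a mod b" using ap_mem[OF basic_pos[OF assms(1)]] assms(2) by blast
  then have "gcd x b = gcd a b" by (metis gcd_red_nat)
  moreover have "coprime a b" using assms(1) unfolding basic_def by simp
  ultimately show ?thesis by (simp add: coprime_iff_gcd_eq_1)
qed

lemma ap_sub:
  assumes "b dvd e" "x \<in> arith_prog a b" "b > 0" "e > 0"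
  shows "arith_prog x e \<subseteq> arith_prog a b"
proof
  fix y assume "y \<in> arith_prog x e"
  then have "x \<le> y" "y mod e = x mod e" using ap_mem[OF assms(4)] by blast+
  then have "y mod e mod b = x mod e mod b" by simp
  then have "y mod b = x mod b" using assms(1) by (simp add: mod_mod_cancel)
  moreover have "a \<le> x" "x mod b = a mod b" using assms(2) ap_mem[OF assms(3)] by blast+
  ultimately show "y \<in> arith_prog a b" using ap_mem[OF assms(3)] \<open>x \<le> y\<close> by auto
qed

lemma basic_at:
  assumes "basic a b" "x \<in> arith_prog a b"
  shows "basic x b \<and> arith_prog x b \<subseteq> arith_prog a b"
proof -
  have "a \<ge> 1" using assms(1) unfolding basic_def by simp
  then have "x \<ge> 1" using ap_ge[OF assms(2)] by simp
  moreover have "coprime x b" using ap_coprime assms by blast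
  ultimately have "basic x b" using assms(1) by (auto simp: basic_def)
  moreover have "arith_prog x b \<subseteq> arith_prog a b"
    using ap_sub[of b b x a] assms basic_pos by auto
  ultimately show ?thesis by blast
qed

lemma sqf_lcm:
  fixes b d :: nat
  assumes "squarefree b" "squarefree d"
  shows "squarefree (lcm b d)"
proof -
  have b0: "b \<noteq> 0" and d0: "d \<noteq> 0" using assms not_squarefree_0 by metis+
  have l0: "lcm b d \<noteq> 0" using b0 d0 by (simp add: lcm_eq_0_iff)
  show ?thesis
    unfolding squarefree_factorial_semiring''[OF l0]
  proof (intro allI impI)
    fix p :: nat assume "prime p"
    then show "multiplicity p (lcm b d) \<le> 1"
      using multiplicity_lcm[OF b0 d0 \<open>prime p\<close>]
        assms squarefree_factorial_semiring''[OF b0] squarefree_factorial_semiring''[OF d0]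
      by auto
  qed
qed

lemma coprime_lcm:
  fixes x b d :: nat
  assumes "coprime x b" "coprime x d"
  shows "coprime x (lcm b d)"
proof -
  have "coprime x (b * d)" using assms by simp
  moreover have "lcm b d dvd b * d" by (simp add: lcm_least)
  ultimately show ?thesis
  proof (intro coprimeI)
    fix c assume "c dvd x" "c dvd lcm b d"
    then have "c dvd b * d" using \<open>lcm b d dvd b * d\<close> dvd_trans by blast
    then show "is_unit c" using \<open>coprime x (b * d)\<close> \<open>c dvd x\<close> coprime_common_divisor by blast
  qed
qed

lemma lcm_nbhd:
  assumes e1: "basic x e1" and e2: "basic x e2"
  shows "\<exists>e. basic x e \<and> arith_prog x e \<subseteq> arith_prog x e1 \<and> arith_prog x e \<subseteq> arith_prog x e2"
proof -
  define e where "e = lcm e1 e2"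
  have p1: "e1 > 0" using e1 by (rule basic_pos)
  have p2: "e2 > 0" using e2 by (rule basic_pos)
  have "e > 0" unfolding e_def using p1 p2 by (rule lcm_pos_nat)
  have c1: "coprime x e1" "squarefree e1" "x \<ge> 1" using e1 unfolding basic_def by simp_all
  have c2: "coprime x e2" "squarefree e2" using e2 unfolding basic_def by simp_all
  have "coprime x e" unfolding e_def using c1(1) c2(1) by (rule coprime_lcm)
  moreover have "squarefree e" unfolding e_def using c1(2) c2(2) by (rule sqf_lcm)
  ultimately have be: "basic x e" using c1(3) \<open>e > 0\<close> unfolding basic_def by simp
  have "e1 dvd e" "e2 dvd e" unfolding e_def by simp_all
  have "arith_prog x e \<subseteq> arith_prog x e1"
    by (rule ap_sub[OF \<open>e1 dvd e\<close> ap_self p1 \<open>e > 0\<close>])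
  moreover have "arith_prog x e \<subseteq> arith_prog x e2"
    by (rule ap_sub[OF \<open>e2 dvd e\<close> ap_self p2 \<open>e > 0\<close>])
  ultimately show ?thesis using be by blast
qed

lemma topspace_KT: "topspace KT = {x. 1 \<le> x}"
proof -
  have "\<Union>kirch_base = {x. 1 \<le> x}"
  proof
    show "\<Union>kirch_base \<subseteq> {x. 1 \<le> x}"
    proof
      fix x assume "x \<in> \<Union>kirch_base"
      then obtain s where "s \<in> kirch_base" "x \<in> s" by blast
      then obtain a b where "s = arith_prog a b" "a \<ge> 1" unfolding kirch_base_def by blast
      then show "x \<in> {x. 1 \<le> x}" using ap_ge \<open>x \<in> s\<close> by fastforce
    qed
  next
    show "{x. 1 \<le> x} \<subseteq> \<Union>kirch_base"
    proof
      fix x :: nat assume "x \<in> {x. 1 \<le> x}"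
      then have "\<exists>a b. arith_prog x 1 = arith_prog a b \<and> a \<ge> 1 \<and> b \<ge> 1 \<and> coprime a b \<and> squarefree b"
        by (intro exI[of _ x] exI[of _ "1::nat"]) simp
      then have "arith_prog x 1 \<in> kirch_base" "x \<in> arith_prog x 1"
        by (auto simp: kirch_base_def ap_self)
      then show "x \<in> \<Union>kirch_base" by blast
    qed
  qed
  then show ?thesis by (simp add: kirch_topology_def)
qed

lemma basic_open: "basic a b \<Longrightarrow> openin KT (arith_prog a b)"
  unfolding kirch_topology_def
proof (rule topology_generated_by_Basis)
  assume "basic a b"
  then show "arith_prog a b \<in> kirch_base" unfolding kirch_base_def basic_def by blast
qed

lemma openin_KT:
  "openin KT U \<longleftrightarrow> U \<subseteq> {x. 1 \<le> x} \<and> (\<forall>x\<in>U. \<exists>e. basic x e \<and> arith_prog x e \<subseteq> U)"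
proof
  assume "openin KT U"
  then have "U \<subseteq> topspace KT" by (rule openin_subset)
  then have sub: "U \<subseteq> {x. 1 \<le> x}" by (simp add: topspace_KT)
  have "generate_topology_on kirch_base U"
    using \<open>openin KT U\<close> unfolding kirch_topology_def by (rule openin_topology_generated_by)
  then have "\<forall>x\<in>U. \<exists>e. basic x e \<and> arith_prog x e \<subseteq> U"
  proof (induction rule: generate_topology_on.induct)
    case Empty then show ?case by simp
  next
    case (Int a b)
    show ?case
    proof
      fix x assume "x \<in> a \<inter> b"
      then have xa: "x \<in> a" and xb: "x \<in> b" by auto
      obtain e1 where e1: "basic x e1" "arith_prog x e1 \<subseteq> a" using Int.IH(1) xa by blast
      obtain e2 where e2: "basic x e2" "arith_prog x e2 \<subseteq> b" using Int.IH(2) xb by blast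
      obtain e where "basic x e" "arith_prog x e \<subseteq> arith_prog x e1" "arith_prog x e \<subseteq> arith_prog x e2"
        using lcm_nbhd[OF e1(1) e2(1)] by blast
      then show "\<exists>e. basic x e \<and> arith_prog x e \<subseteq> a \<inter> b" using e1(2) e2(2) by blast
    qed
  next
    case (UN K)
    show ?case
    proof
      fix x assume "x \<in> \<Union>K"
      then obtain k where "k \<in> K" "x \<in> k" by blast
      then obtain e where "basic x e" "arith_prog x e \<subseteq> k" using UN by blast
      then show "\<exists>e. basic x e \<and> arith_prog x e \<subseteq> \<Union>K" using \<open>k \<in> K\<close> by blast
    qed
  next
    case (Basis s)
    then obtain a b where "s = arith_prog a b" "a \<ge> 1" "b \<ge> 1" "coprime a b" "squarefree b"
      unfolding kirch_base_def by blast
    then have s: "s = arith_prog a b" "basic a b" unfolding basic_def by simp_all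
    show ?case
    proof
      fix x assume "x \<in> s"
      then have "basic x b \<and> arith_prog x b \<subseteq> arith_prog a b" using basic_at s by simp
      then show "\<exists>e. basic x e \<and> arith_prog x e \<subseteq> s" using s(1) by blast
    qed
  qed
  then show "U \<subseteq> {x. 1 \<le> x} \<and> (\<forall>x\<in>U. \<exists>e. basic x e \<and> arith_prog x e \<subseteq> U)"
    using sub by blast
next
  assume h: "U \<subseteq> {x. 1 \<le> x} \<and> (\<forall>x\<in>U. \<exists>e. basic x e \<and> arith_prog x e \<subseteq> U)"
  have "\<forall>x\<in>U. \<exists>T. openin KT T \<and> x \<in> T \<and> T \<subseteq> U"
  proof
    fix x assume "x \<in> U"
    then obtain e where e: "basic x e" "arith_prog x e \<subseteq> U" using h by blast
    have "openin KT (arith_prog x e)" using e(1) by (rule basic_open)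
    moreover have "x \<in> arith_prog x e" by (rule ap_self)
    ultimately show "\<exists>T. openin KT T \<and> x \<in> T \<and> T \<subseteq> U" using e(2) by blast
  qed
  then show "openin KT U" by (rule openin_subopen[THEN iffD2])
qed

lemma open_nbhd:
  assumes "openin KT U" "x \<in> U"
  obtains e where "basic x e" "arith_prog x e \<subseteq> U"
proof -
  have "\<forall>x\<in>U. \<exists>e. basic x e \<and> arith_prog x e \<subseteq> U" using assms(1) openin_KT by simp
  then show ?thesis using assms(2) that by blast
qed

lemma closure_KT:
  "x \<in> KT closure_of S \<longleftrightarrow> 1 \<le> x \<and> (\<forall>e. basic x e \<longrightarrow> (\<exists>y\<in>S. y \<in> arith_prog x e))"
proof
  assume h: "x \<in> KT closure_of S"
  have h': "x \<in> topspace KT \<and> (\<forall>T. x \<in> T \<and> openin KT T \<longrightarrow> (\<exists>y. y \<in> S \<and> y \<in> T))"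
    using iffD1[OF in_closure_of h] .
  have "1 \<le> x" using h' by (simp add: topspace_KT)
  moreover have "\<forall>e. basic x e \<longrightarrow> (\<exists>y\<in>S. y \<in> arith_prog x e)"
  proof (intro allI impI)
    fix e assume "basic x e"
    then have "openin KT (arith_prog x e)" by (rule basic_open)
    moreover have "x \<in> arith_prog x e" by (rule ap_self)
    ultimately have "\<exists>y. y \<in> S \<and> y \<in> arith_prog x e" using h' by blast
    then show "\<exists>y\<in>S. y \<in> arith_prog x e" by blast
  qed
  ultimately show "1 \<le> x \<and> (\<forall>e. basic x e \<longrightarrow> (\<exists>y\<in>S. y \<in> arith_prog x e))" by blast
next
  assume h: "1 \<le> x \<and> (\<forall>e. basic x e \<longrightarrow> (\<exists>y\<in>S. y \<in> arith_prog x e))"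
  have t: "x \<in> topspace KT" using h by (simp add: topspace_KT)
  have "\<forall>T. x \<in> T \<and> openin KT T \<longrightarrow> (\<exists>y. y \<in> S \<and> y \<in> T)"
  proof (intro allI impI)
    fix T assume "x \<in> T \<and> openin KT T"
    then obtain e where "basic x e" "arith_prog x e \<subseteq> T" using open_nbhd by metis
    then show "\<exists>y. y \<in> S \<and> y \<in> T" using h by blast
  qed
  then show "x \<in> KT closure_of S" using iffD2[OF in_closure_of, OF conjI[OF t]] by blast
qed

lemma basic_prime:
  assumes "prime p" "\<not> p dvd x" "x \<ge> 1"
  shows "basic x p"
proof -
  have "p > 0" using prime_gt_0_nat assms(1) by blast
  moreover have "coprime x p" using prime_imp_coprime[OF assms(1,2)] by (simp add: coprime_commute)
  moreover have "squarefree p" using assms(1) by (rule squarefree_prime)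
  ultimately show ?thesis using assms(3) unfolding basic_def by simp
qed

lemma CL1:
  assumes "x \<in> KT closure_of S" "prime p" "\<not> p dvd x" "\<forall>y\<in>S. y mod p = c"
  shows "x mod p = c"
proof -
  have "x \<ge> 1" using assms(1) closure_KT by blast
  then have "basic x p" using basic_prime assms by blast
  then obtain y where "y \<in> S" "y \<in> arith_prog x p" using assms(1) closure_KT by blast
  then have "y mod p = x mod p" using ap_mem[OF prime_gt_0_nat[OF assms(2)]] by blast
  then show ?thesis using assms(4) \<open>y \<in> S\<close> by simp
qed

lemma finite_prime_divs: "n > 0 \<Longrightarrow> finite {p::nat. prime p \<and> p dvd n}"
  by (rule finite_subset[OF _ finite_divisors_nat[of n]]) auto

lemma CL2:
  assumes "basic a b" "v \<ge> 1"
    "\<And>p. prime p \<Longrightarrow> p dvd b \<Longrightarrow> \<not> p dvd v \<Longrightarrow> v mod p = a mod p"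
  shows "v \<in> KT closure_of arith_prog a b"
  unfolding closure_KT
proof (intro conjI allI impI)
  show "1 \<le> v" by fact
next
  fix e assume be: "basic v e"
  have b0: "b > 0" using assms(1) basic_pos by blast
  have e0: "e > 0" using be basic_pos by blast
  define P where "P = {p::nat. prime p \<and> p dvd (b * e)}"
  have "finite P" unfolding P_def using finite_prime_divs b0 e0 by simp
  moreover have "\<forall>p\<in>P. prime p" unfolding P_def by simp
  ultimately obtain z where z: "z \<ge> a + v" "\<forall>p\<in>P. z mod p = (if p dvd e then v else a) mod p"
    using crt[of P "a + v" "\<lambda>p. if p dvd e then v else a"] by blast
  have "z mod e = v mod e"
  proof (rule sqf_mod)
    show "squarefree e" using be basic_def by blast
  next
    fix p assume "prime p" "p dvd e"
    then have "p \<in> P" unfolding P_def by simp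
    then show "z mod p = v mod p" using z \<open>p dvd e\<close> by simp
  qed
  moreover have "z mod b = a mod b"
  proof (rule sqf_mod)
    show "squarefree b" using assms(1) basic_def by blast
  next
    fix p assume p: "prime p" "p dvd b"
    then have "p \<in> P" unfolding P_def by simp
    show "z mod p = a mod p"
    proof (cases "p dvd e")
      case True
      have "coprime v e" using be unfolding basic_def by simp
      have "\<not> p dvd v"
      proof
        assume "p dvd v"
        then have "is_unit p" using coprime_common_divisor[OF \<open>coprime v e\<close> _ True] by simp
        then show False using p(1) not_prime_unit by blast
      qed
      then have "v mod p = a mod p" using assms(3) p by blast
      then show ?thesis using z \<open>p \<in> P\<close> True by simp
    next
      case False
      then show ?thesis using z \<open>p \<in> P\<close> by simp
    qed
  qed
  ultimately have "z \<in> arith_prog v e" "z \<in> arith_prog a b"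
    using ap_mem[OF b0] ap_mem[OF e0] z(1) by auto
  then show "\<exists>y\<in>arith_prog a b. y \<in> arith_prog v e" by blast
qed

lemma mod_dvd_eq: "(p::nat) dvd b \<Longrightarrow> x mod b = y mod b \<Longrightarrow> x mod p = y mod p"
proof -
  assume "p dvd b" "x mod b = y mod b"
  then have "x mod b mod p = y mod b mod p" by simp
  then show ?thesis using \<open>p dvd b\<close> by (simp add: mod_mod_cancel)
qed

lemma basic_ndvd: "basic x e \<Longrightarrow> prime s \<Longrightarrow> s dvd e \<Longrightarrow> \<not> s dvd x"
proof
  assume "basic x e" "prime s" "s dvd e" "s dvd x"
  then have "coprime x e" unfolding basic_def by simp
  then have "is_unit s" using coprime_common_divisor \<open>s dvd x\<close> \<open>s dvd e\<close> by blast
  then show False using \<open>prime s\<close> not_prime_unit by blast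
qed

lemma ap_mod_p: "basic a b \<Longrightarrow> x \<in> arith_prog a b \<Longrightarrow> p dvd b \<Longrightarrow> x mod p = a mod p"
proof -
  assume ab: "basic a b" and "x \<in> arith_prog a b" "p dvd b"
  then have "x mod b = a mod b" using ap_mem[OF basic_pos[OF ab]] by blast
  then show ?thesis using mod_dvd_eq \<open>p dvd b\<close> by blast
qed

lemma open_sub: "openin KT U \<Longrightarrow> U \<subseteq> {x. 1 \<le> x}"
  using openin_subset[of KT U] by (simp add: topspace_KT)

lemma basic_ge1: "basic a b \<Longrightarrow> x \<in> arith_prog a b \<Longrightarrow> 1 \<le> x"
proof -
  assume "basic a b" "x \<in> arith_prog a b"
  then have "1 \<le> a" "a \<le> x" using ap_ge unfolding basic_def by auto
  then show ?thesis by simp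
qed

definition IS :: "nat set \<Rightarrow> bool" where
  "IS X \<longleftrightarrow> (\<forall>U V. openin KT U \<longrightarrow> openin KT V \<longrightarrow> U \<noteq> {} \<longrightarrow> V \<noteq> {} \<longrightarrow> U \<subseteq> X \<longrightarrow> V \<subseteq> X
      \<longrightarrow> KT closure_of U \<inter> KT closure_of V \<inter> X \<noteq> {})"

lemma IS_D:
  assumes "IS X" "openin KT U" "openin KT V" "U \<noteq> {}" "V \<noteq> {}" "U \<subseteq> X" "V \<subseteq> X"
  obtains z where "z \<in> KT closure_of U" "z \<in> KT closure_of V" "z \<in> X"
  using assms unfolding IS_def by blast

lemma basic_IS:
  assumes ab: "basic a b"
  shows "IS (arith_prog a b)"
  unfolding IS_def
proof (intro allI impI)
  fix U V
  assume U: "openin KT U" and V: "openin KT V" and "U \<noteq> {}" "V \<noteq> {}"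
    and sU: "U \<subseteq> arith_prog a b" and sV: "V \<subseteq> arith_prog a b"
  obtain u where "u \<in> U" using \<open>U \<noteq> {}\<close> by blast
  obtain e1 where e1: "basic u e1" "arith_prog u e1 \<subseteq> U" using open_nbhd[OF U \<open>u \<in> U\<close>] by blast
  obtain v where "v \<in> V" using \<open>V \<noteq> {}\<close> by blast
  obtain e2 where e2: "basic v e2" "arith_prog v e2 \<subseteq> V" using open_nbhd[OF V \<open>v \<in> V\<close>] by blast
  have b0: "b > 0" using ab basic_pos by blast
  have "e1 > 0" "e2 > 0" using e1 e2 basic_pos by blast+
  define P where "P = {p::nat. prime p \<and> p dvd (b * e1 * e2)}"
  have "finite P" unfolding P_def using finite_prime_divs b0 \<open>e1 > 0\<close> \<open>e2 > 0\<close> by simp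
  moreover have "\<forall>p\<in>P. prime p" unfolding P_def by simp
  ultimately obtain z where z: "z \<ge> a" "\<forall>p\<in>P. z mod p = (if p dvd b then a else 0) mod p"
    using crt[of P a "\<lambda>p. if p dvd b then a else 0"] by blast
  have zb: "z mod b = a mod b"
  proof (rule sqf_mod)
    show "squarefree b" using ab basic_def by blast
  next
    fix p assume "prime p" "p dvd b"
    then have "p \<in> P" unfolding P_def by simp
    then show "z mod p = a mod p" using z \<open>p dvd b\<close> by simp
  qed
  then have zX: "z \<in> arith_prog a b" using ap_mem[OF b0] z(1) by blast
  have "1 \<le> z" using basic_ge1[OF ab zX] .
  have cl: "z \<in> KT closure_of (arith_prog w e)"
    if we: "basic w e" "arith_prog w e \<subseteq> arith_prog a b" "e dvd e1 * e2" for w e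
  proof (rule CL2[OF we(1) \<open>1 \<le> z\<close>])
    fix p assume p: "prime p" "p dvd e" "\<not> p dvd z"
    have "p dvd e1 * e2" using dvd_trans[OF p(2) we(3)] .
    then have "p dvd b * (e1 * e2)" by (rule dvd_mult)
    then have "p \<in> P" unfolding P_def using p(1) by (simp add: mult.assoc)
    show "z mod p = w mod p"
    proof (cases "p dvd b")
      case True
      have "w \<in> arith_prog a b" using we(2) ap_self by blast
      then have "w mod p = a mod p" using ap_mod_p[OF ab _ True] by blast
      moreover have "z mod p = a mod p" using z \<open>p \<in> P\<close> True by simp
      ultimately show ?thesis by simp
    next
      case False
      then have "z mod p = 0" using z \<open>p \<in> P\<close> by simp
      then show ?thesis using p(3) by auto
    qed
  qed
  have "arith_prog u e1 \<subseteq> arith_prog a b" using e1(2) sU by blast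
  then have "z \<in> KT closure_of (arith_prog u e1)" using cl[OF e1(1)] by simp
  then have "z \<in> KT closure_of U" using closure_of_mono[OF e1(2)] by blast
  moreover have "arith_prog v e2 \<subseteq> arith_prog a b" using e2(2) sV by blast
  then have "z \<in> KT closure_of (arith_prog v e2)" using cl[OF e2(1)] by simp
  then have "z \<in> KT closure_of V" using closure_of_mono[OF e2(2)] by blast
  ultimately show "KT closure_of U \<inter> KT closure_of V \<inter> arith_prog a b \<noteq> {}" using zX by blast
qed

lemma IS_homeo:
  assumes hg: "homeomorphic_maps KT KT h g" and X: "X \<subseteq> topspace KT" and "IS X"
  shows "IS (h ` X)"
  unfolding IS_def
proof (intro allI impI)
  fix U V
  assume U: "openin KT U" and V: "openin KT V" and "U \<noteq> {}" "V \<noteq> {}"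
    and sU: "U \<subseteq> h ` X" and sV: "V \<subseteq> h ` X"
  have hm: "homeomorphic_map KT KT h" using hg homeomorphic_maps_imp_map by blast
  have gm: "homeomorphic_map KT KT g" using hg homeomorphic_maps_sym homeomorphic_maps_imp_map by blast
  have gh: "\<And>x. x \<in> topspace KT \<Longrightarrow> g (h x) = x" and hgi: "\<And>y. y \<in> topspace KT \<Longrightarrow> h (g y) = y"
    using hg unfolding homeomorphic_maps_def by auto
  have Ut: "U \<subseteq> topspace KT" using U openin_subset by blast
  have Vt: "V \<subseteq> topspace KT" using V openin_subset by blast
  have oU: "openin KT (g ` U)" using homeomorphic_map_openness[OF gm Ut] U by simp
  have oV: "openin KT (g ` V)" using homeomorphic_map_openness[OF gm Vt] V by simp
  have gUX: "g ` U \<subseteq> X"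
  proof
    fix y assume "y \<in> g ` U"
    then obtain u where "u \<in> U" "y = g u" by blast
    then obtain x where "x \<in> X" "u = h x" using sU by blast
    then show "y \<in> X" using gh X \<open>y = g u\<close> by auto
  qed
  have gVX: "g ` V \<subseteq> X"
  proof
    fix y assume "y \<in> g ` V"
    then obtain u where "u \<in> V" "y = g u" by blast
    then obtain x where "x \<in> X" "u = h x" using sV by blast
    then show "y \<in> X" using gh X \<open>y = g u\<close> by auto
  qed
  have "g ` U \<noteq> {}" "g ` V \<noteq> {}" using \<open>U \<noteq> {}\<close> \<open>V \<noteq> {}\<close> by auto
  then obtain w where w: "w \<in> KT closure_of (g ` U)" "w \<in> KT closure_of (g ` V)" "w \<in> X"
    using IS_D[OF \<open>IS X\<close> oU oV _ _ gUX gVX] by blast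
  have hgU: "h ` g ` U = U" using hgi Ut by (force simp: image_image)
  have hgV: "h ` g ` V = V" using hgi Vt by (force simp: image_image)
  have gUt: "g ` U \<subseteq> topspace KT" using gUX X by blast
  have gVt: "g ` V \<subseteq> topspace KT" using gVX X by blast
  have "h w \<in> h ` (KT closure_of (g ` U))" using w(1) by blast
  then have "h w \<in> KT closure_of (h ` g ` U)" using homeomorphic_map_closure_of[OF hm gUt] by simp
  then have "h w \<in> KT closure_of U" using hgU by simp
  moreover have "h w \<in> h ` (KT closure_of (g ` V))" using w(2) by blast
  then have "h w \<in> KT closure_of (h ` g ` V)" using homeomorphic_map_closure_of[OF hm gVt] by simp
  then have "h w \<in> KT closure_of V" using hgV by simp
  ultimately show "KT closure_of U \<inter> KT closure_of V \<inter> h ` X \<noteq> {}" using w(3) by blast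
qed

lemma IS1:
  assumes X: "openin KT X" "IS X" and p: "prime p" and nd: "\<forall>x\<in>X. \<not> p dvd x"
    and xy: "x \<in> X" "y \<in> X"
  shows "x mod p = y mod p"
proof (rule ccontr)
  assume ne: "x mod p \<noteq> y mod p"
  have p0: "p > 0" using p prime_gt_0_nat by blast
  have "1 \<le> x" "1 \<le> y" using open_sub[OF X(1)] xy by auto
  have bx: "basic x p" using basic_prime[OF p] nd xy \<open>1 \<le> x\<close> by blast
  have by': "basic y p" using basic_prime[OF p] nd xy \<open>1 \<le> y\<close> by blast
  define U where "U = X \<inter> arith_prog x p"
  define V where "V = X \<inter> arith_prog y p"
  have oU: "openin KT U" unfolding U_def using X(1) basic_open[OF bx] by (rule openin_Int)
  have oV: "openin KT V" unfolding V_def using X(1) basic_open[OF by'] by (rule openin_Int)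
  have "x \<in> U" "y \<in> V" unfolding U_def V_def using xy ap_self by auto
  then obtain z where z: "z \<in> KT closure_of U" "z \<in> KT closure_of V" "z \<in> X"
    using IS_D[OF X(2) oU oV] unfolding U_def V_def by blast
  have "\<not> p dvd z" using nd z(3) by blast
  have "\<forall>w\<in>U. w mod p = x mod p" unfolding U_def using ap_mem[OF p0] by blast
  then have "z mod p = x mod p" using CL1[OF z(1) p \<open>\<not> p dvd z\<close>] by blast
  moreover have "\<forall>w\<in>V. w mod p = y mod p" unfolding V_def using ap_mem[OF p0] by blast
  then have "z mod p = y mod p" using CL1[OF z(2) p \<open>\<not> p dvd z\<close>] by blast
  ultimately show False using ne by simp
qed

lemma T_finite:
  assumes X: "openin KT X" "X \<noteq> {}"
  shows "finite {p. prime p \<and> (\<forall>x\<in>X. \<not> p dvd x)}"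
proof -
  obtain x0 where "x0 \<in> X" using X(2) by blast
  obtain e where e: "basic x0 e" "arith_prog x0 e \<subseteq> X" using open_nbhd[OF X(1) \<open>x0 \<in> X\<close>] by blast
  have e0: "e > 0" using e(1) basic_pos by blast
  have "{p. prime p \<and> (\<forall>x\<in>X. \<not> p dvd x)} \<subseteq> {p. prime p \<and> p dvd e}"
  proof
    fix p assume p: "p \<in> {p. prime p \<and> (\<forall>x\<in>X. \<not> p dvd x)}"
    show "p \<in> {p. prime p \<and> p dvd e}"
    proof (rule ccontr)
      assume "p \<notin> {p. prime p \<and> p dvd e}"
      then have npe: "\<not> p dvd e" using p by simp
      define PP where "PP = insert p {q. prime q \<and> q dvd e}"
      have "finite PP" unfolding PP_def using finite_prime_divs[OF e0] by simp
      moreover have "\<forall>q\<in>PP. prime q" unfolding PP_def using p by simp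
      ultimately obtain w where w: "w \<ge> x0" "\<forall>q\<in>PP. w mod q = (if q = p then 0 else x0) mod q"
        using crt[of PP x0 "\<lambda>q. if q = p then 0 else x0"] by blast
      have "w mod e = x0 mod e"
      proof (rule sqf_mod)
        show "squarefree e" using e(1) basic_def by blast
      next
        fix q assume "prime q" "q dvd e"
        then have "q \<in> PP" "q \<noteq> p" unfolding PP_def using npe by auto
        then show "w mod q = x0 mod q" using w(2) by simp
      qed
      then have "w \<in> arith_prog x0 e" using ap_mem[OF e0] w(1) by blast
      then have "w \<in> X" using e(2) by blast
      moreover have "p dvd w" using w(2) unfolding PP_def by auto
      ultimately show False using p by blast
    qed
  qed
  moreover have "finite {p. prime p \<and> p dvd e}" using finite_prime_divs[OF e0] .
  ultimately show ?thesis by (rule finite_subset)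
qed

lemma refine:
  assumes b1: "basic z1 g1" "arith_prog z1 g1 \<subseteq> X"
    and Q: "finite Q" "\<forall>s\<in>Q. prime s \<and> \<not> s dvd c s"
    and cons: "\<forall>s\<in>Q. s dvd g1 \<longrightarrow> z1 mod s = c s mod s"
  shows "\<exists>z2 e2. basic z2 e2 \<and> arith_prog z2 e2 \<subseteq> X \<and> (\<forall>s\<in>Q. s dvd e2 \<and> z2 mod s = c s mod s)"
proof -
  have g0: "g1 > 0" using b1(1) basic_pos by blast
  define PP where "PP = Q \<union> {q. prime q \<and> q dvd g1}"
  have "finite PP" unfolding PP_def using finite_prime_divs[OF g0] Q(1) by simp
  moreover have "\<forall>q\<in>PP. prime q" unfolding PP_def using Q(2) by auto
  ultimately obtain z2 where z2: "z2 \<ge> z1" "\<forall>s\<in>PP. z2 mod s = (if s dvd g1 then z1 else c s) mod s"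
    using crt[of PP z1 "\<lambda>s. if s dvd g1 then z1 else c s"] by blast
  have zQ: "\<forall>s\<in>Q. z2 mod s = c s mod s"
  proof
    fix s assume "s \<in> Q"
    then have "s \<in> PP" unfolding PP_def by simp
    show "z2 mod s = c s mod s"
    proof (cases "s dvd g1")
      case True
      then show ?thesis using z2(2) \<open>s \<in> PP\<close> cons \<open>s \<in> Q\<close> by simp
    next
      case False
      then show ?thesis using z2(2) \<open>s \<in> PP\<close> by simp
    qed
  qed
  have "z2 mod g1 = z1 mod g1"
  proof (rule sqf_mod)
    show "squarefree g1" using b1(1) basic_def by blast
  next
    fix q assume "prime q" "q dvd g1"
    then have "q \<in> PP" unfolding PP_def by simp
    then show "z2 mod q = z1 mod q" using z2(2) \<open>q dvd g1\<close> by simp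
  qed
  then have z2P: "z2 \<in> arith_prog z1 g1" using ap_mem[OF g0] z2(1) by blast
  define M where "M = prod id Q"
  have M0: "M > 0" unfolding M_def using Q(2) prime_gt_0_nat by (simp add: prod_pos)
  have sM: "squarefree M" unfolding M_def
  proof (rule squarefree_prod_coprime)
    fix a b assume "a \<in> Q" "b \<in> Q" "a \<noteq> b"
    then have "prime a" "prime b" using Q(2) by auto
    then have "coprime a b" using primes_coprime \<open>a \<noteq> b\<close> by blast
    then show "coprime (id a) (id b)" by simp
  next
    fix a assume "a \<in> Q"
    then have "prime a" using Q(2) by auto
    then show "squarefree (id a)" using squarefree_prime by simp
  qed
  define e2 where "e2 = lcm g1 M"
  have e20: "e2 > 0" unfolding e2_def using g0 M0 by (rule lcm_pos_nat)
  have se2: "squarefree e2" unfolding e2_def using b1(1) sM sqf_lcm unfolding basic_def by blast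
  have c1: "coprime z2 g1" using ap_coprime[OF b1(1) z2P] .
  have c2: "coprime z2 M" unfolding M_def
  proof (rule prod_coprime_right)
    fix i assume "i \<in> Q"
    then have "prime i" "\<not> i dvd c i" using Q(2) by auto
    moreover have "z2 mod i = c i mod i" using zQ \<open>i \<in> Q\<close> by blast
    ultimately have "\<not> i dvd z2" by (metis dvd_eq_mod_eq_0)
    then have "coprime i z2" using prime_imp_coprime \<open>prime i\<close> by blast
    then show "coprime z2 (id i)" by (simp add: coprime_commute)
  qed
  have "coprime z2 e2" unfolding e2_def using c1 c2 by (rule coprime_lcm)
  moreover have "1 \<le> z2" using basic_ge1[OF b1(1) z2P] .
  ultimately have be2: "basic z2 e2" using e20 se2 unfolding basic_def by simp
  have "g1 dvd e2" unfolding e2_def by simp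
  have "arith_prog z2 e2 \<subseteq> arith_prog z1 g1" by (rule ap_sub[OF \<open>g1 dvd e2\<close> z2P g0 e20])
  then have sub: "arith_prog z2 e2 \<subseteq> X" using b1(2) by blast
  have "\<forall>s\<in>Q. s dvd e2 \<and> z2 mod s = c s mod s"
  proof
    fix s assume "s \<in> Q"
    have "s dvd M" unfolding M_def using Q(1) \<open>s \<in> Q\<close> by (metis dvd_prodI id_apply)
    then have "s dvd e2" unfolding e2_def by (metis dvd_lcm2 dvd_trans)
    then show "s dvd e2 \<and> z2 mod s = c s mod s" using zQ \<open>s \<in> Q\<close> by blast
  qed
  then show ?thesis using be2 sub by blast
qed

lemma dense_IS:
  assumes X: "openin KT X" "X \<noteq> {}" "IS X"
    and Q: "finite Q" "\<forall>s\<in>Q. prime s \<and> \<not> s dvd c s"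
    and comp: "\<forall>s\<in>Q. (\<forall>x\<in>X. \<not> s dvd x) \<longrightarrow> (\<exists>x\<in>X. x mod s = c s mod s)"
  shows "\<exists>z e. basic z e \<and> arith_prog z e \<subseteq> X \<and> (\<forall>s\<in>Q. s dvd e \<and> z mod s = c s mod s)"
  using Q(1) Q(2) comp
proof (induction Q rule: finite_induct)
  case empty
  obtain x where "x \<in> X" using X(2) by blast
  obtain e where "basic x e" "arith_prog x e \<subseteq> X" using open_nbhd[OF X(1) \<open>x \<in> X\<close>] by blast
  then show ?case by blast
next
  case (insert p Q)
  have pQ: "\<forall>s\<in>Q. prime s \<and> \<not> s dvd c s" using insert.prems(1) by simp
  have compQ: "\<forall>s\<in>Q. (\<forall>x\<in>X. \<not> s dvd x) \<longrightarrow> (\<exists>x\<in>X. x mod s = c s mod s)"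
    using insert.prems(2) by simp
  obtain z0 e0 where z0: "basic z0 e0" "arith_prog z0 e0 \<subseteq> X" "\<forall>s\<in>Q. s dvd e0 \<and> z0 mod s = c s mod s"
    using insert.IH[OF pQ compQ] by blast
  have pp: "prime p" "\<not> p dvd c p" using insert.prems(1) by auto
  have p0: "p > 0" using pp(1) prime_gt_0_nat by blast
  have Qi: "\<forall>s\<in>insert p Q. prime s \<and> \<not> s dvd c s" using insert.prems(1) .
  have fQi: "finite (insert p Q)" using insert(1) by simp
  show ?case
  proof (cases "p dvd e0 \<and> z0 mod p \<noteq> c p mod p")
    case False
    have "\<forall>s\<in>insert p Q. s dvd e0 \<longrightarrow> z0 mod s = c s mod s" using z0(3) False by auto
    then show ?thesis using refine[OF z0(1) z0(2) fQi Qi] by blast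
  next
    case True
    have "\<exists>w\<in>X. p dvd w"
    proof (rule ccontr)
      assume "\<not> (\<exists>w\<in>X. p dvd w)"
      then have nd: "\<forall>x\<in>X. \<not> p dvd x" by blast
      then obtain x1 where x1: "x1 \<in> X" "x1 mod p = c p mod p" using insert.prems(2) by blast
      have "z0 \<in> X" using z0(2) ap_self by blast
      then have "z0 mod p = x1 mod p" using IS1[OF X(1) X(3) pp(1) nd] x1(1) by blast
      then show False using True x1(2) by simp
    qed
    then obtain w where w: "w \<in> X" "p dvd w" by blast
    obtain f where f: "basic w f" "arith_prog w f \<subseteq> X" using open_nbhd[OF X(1) w(1)] by blast
    have f0: "f > 0" using f(1) basic_pos by blast
    have npf: "\<not> p dvd f"
    proof
      assume "p dvd f"
      then have "\<not> p dvd w" using basic_ndvd[OF f(1) pp(1)] by blast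
      then show False using w(2) by blast
    qed
    define PP where "PP = insert p {q. prime q \<and> q dvd f}"
    have "finite PP" unfolding PP_def using finite_prime_divs[OF f0] by simp
    moreover have "\<forall>q\<in>PP. prime q" unfolding PP_def using pp(1) by simp
    ultimately obtain v where v: "v \<ge> w" "\<forall>q\<in>PP. v mod q = (if q = p then c p else w) mod q"
      using crt[of PP w "\<lambda>q. if q = p then c p else w"] by blast
    have "v mod f = w mod f"
    proof (rule sqf_mod)
      show "squarefree f" using f(1) basic_def by blast
    next
      fix q assume "prime q" "q dvd f"
      then have "q \<in> PP" "q \<noteq> p" unfolding PP_def using npf by auto
      then show "v mod q = w mod q" using v(2) by simp
    qed
    then have "v \<in> arith_prog w f" using ap_mem[OF f0] v(1) by blast
    then have vX: "v \<in> X" using f(2) by blast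
    have vp: "v mod p = c p mod p" using v(2) unfolding PP_def by simp
    have npv: "\<not> p dvd v"
    proof
      assume "p dvd v"
      then have "c p mod p = 0" using vp by simp
      then show False using pp(2) by (simp add: dvd_eq_mod_eq_0)
    qed
    have "1 \<le> v" using open_sub[OF X(1)] vX by blast
    have bv: "basic v p" using basic_prime[OF pp(1) npv \<open>1 \<le> v\<close>] .
    define U where "U = arith_prog z0 e0"
    define V where "V = X \<inter> arith_prog v p"
    have oU: "openin KT U" unfolding U_def using z0(1) by (rule basic_open)
    have oV: "openin KT V" unfolding V_def using X(1) basic_open[OF bv] by (rule openin_Int)
    have "z0 \<in> U" unfolding U_def by (rule ap_self)
    have "v \<in> V" unfolding V_def using vX ap_self by blast
    have "U \<subseteq> X" unfolding U_def using z0(2) .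
    have "V \<subseteq> X" unfolding V_def by blast
    obtain z where z: "z \<in> KT closure_of U" "z \<in> KT closure_of V" "z \<in> X"
      using IS_D[OF X(3) oU oV _ _ \<open>U \<subseteq> X\<close> \<open>V \<subseteq> X\<close>] \<open>z0 \<in> U\<close> \<open>v \<in> V\<close> by blast
    have Ures: "\<forall>y\<in>U. y mod s = z0 mod s" if "s dvd e0" for s
      unfolding U_def using ap_mod_p[OF z0(1) _ that] by blast
    have Vres: "\<forall>y\<in>V. y mod p = v mod p" unfolding V_def using ap_mem[OF p0] by blast
    have pz: "p dvd z"
    proof (rule ccontr)
      assume npz: "\<not> p dvd z"
      have "z mod p = z0 mod p" using CL1[OF z(1) pp(1) npz Ures] True by blast
      moreover have "z mod p = v mod p" using CL1[OF z(2) pp(1) npz Vres] .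
      ultimately show False using True vp by simp
    qed
    have zQ: "z mod s = c s mod s" if "s \<in> Q" "\<not> s dvd z" for s
    proof -
      have "s dvd e0" "z0 mod s = c s mod s" using z0(3) that(1) by auto
      moreover have "prime s" using pQ that(1) by blast
      ultimately have "z mod s = z0 mod s" using CL1[OF z(1) _ that(2) Ures] by blast
      then show ?thesis using \<open>z0 mod s = c s mod s\<close> by simp
    qed
    obtain g1 where g1: "basic z g1" "arith_prog z g1 \<subseteq> X" using open_nbhd[OF X(1) z(3)] by blast
    have "\<forall>s\<in>insert p Q. s dvd g1 \<longrightarrow> z mod s = c s mod s"
    proof (intro ballI impI)
      fix s assume s: "s \<in> insert p Q" "s dvd g1"
      have "prime s" using Qi s(1) by blast
      then have "\<not> s dvd z" using basic_ndvd[OF g1(1)] s(2) by blast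
      then have "s \<noteq> p" using pz by blast
      then have "s \<in> Q" using s(1) by blast
      then show "z mod s = c s mod s" using zQ \<open>\<not> s dvd z\<close> by blast
    qed
    then show ?thesis using refine[OF g1(1) g1(2) fQi Qi] by blast
  qed
qed

lemma dense_meet:
  assumes X: "openin KT X" "X \<noteq> {}" "IS X" and bu: "basic u e"
    and comp: "\<And>s. prime s \<Longrightarrow> s dvd e \<Longrightarrow> \<forall>x\<in>X. \<not> s dvd x \<Longrightarrow> \<exists>x\<in>X. x mod s = u mod s"
  shows "X \<inter> arith_prog u e \<noteq> {}"
proof -
  have e0: "e > 0" using bu basic_pos by blast
  define Q where "Q = {s. prime s \<and> s dvd e}"
  have fQ: "finite Q" unfolding Q_def using finite_prime_divs[OF e0] .
  have pQ: "\<forall>s\<in>Q. prime s \<and> \<not> s dvd u" unfolding Q_def using basic_ndvd[OF bu] by blast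
  have cQ: "\<forall>s\<in>Q. (\<forall>x\<in>X. \<not> s dvd x) \<longrightarrow> (\<exists>x\<in>X. x mod s = u mod s)"
    unfolding Q_def using comp by blast
  obtain z e2 where ze: "basic z e2" "arith_prog z e2 \<subseteq> X" "\<forall>s\<in>Q. s dvd e2 \<and> z mod s = u mod s"
    using dense_IS[OF X fQ, of "\<lambda>_. u"] pQ cQ by blast
  define x where "x = z + e2 * u"
  have "x \<in> arith_prog z e2" unfolding x_def arith_prog_def by blast
  then have xX: "x \<in> X" using ze(2) by blast
  have "e2 \<ge> 1" using ze(1) basic_def by blast
  then have "x \<ge> u" unfolding x_def by (metis le_add2 mult_le_mono1 mult_1 order_trans)
  have "x mod e = u mod e"
  proof (rule sqf_mod)
    show "squarefree e" using bu basic_def by blast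
  next
    fix s assume "prime s" "s dvd e"
    then have "s \<in> Q" unfolding Q_def by simp
    then have "s dvd e2" "z mod s = u mod s" using ze(3) by auto
    then obtain k where "e2 = s * k" by (auto elim: dvdE)
    then have "x = z + s * (k * u)" unfolding x_def by simp
    then have "x mod s = z mod s" by simp
    then show "x mod s = u mod s" using \<open>z mod s = u mod s\<close> by simp
  qed
  then have "x \<in> arith_prog u e" using ap_mem[OF e0] \<open>x \<ge> u\<close> by blast
  then show ?thesis using xX by blast
qed

lemma decode:
  fixes I :: "nat set" and A :: "nat \<Rightarrow> nat set"
  assumes opn: "\<And>j. j \<in> I \<Longrightarrow> openin KT (A j)"
    and ne: "\<And>j. j \<in> I \<Longrightarrow> A j \<noteq> {}"
    and isx: "\<And>j. j \<in> I \<Longrightarrow> IS (A j)"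
    and disj: "\<And>i j. i \<in> I \<Longrightarrow> j \<in> I \<Longrightarrow> i \<noteq> j \<Longrightarrow> A i \<inter> A j = {}"
    and cov: "\<And>z j. 1 \<le> z \<Longrightarrow> (\<forall>l\<in>I. z \<notin> A l) \<Longrightarrow> j \<in> I \<Longrightarrow> z \<in> KT closure_of (A j)"
    and two: "i0 \<in> I" "j0 \<in> I" "i0 \<noteq> j0"
  shows "\<exists>r. prime r \<and> (\<forall>j\<in>I. \<forall>x\<in>A j. \<not> r dvd x) \<and>
    (\<forall>i\<in>I. \<forall>j\<in>I. i \<noteq> j \<longrightarrow> (\<forall>x\<in>A i. \<forall>y\<in>A j. x mod r \<noteq> y mod r)) \<and>
    (\<forall>j\<in>I. \<forall>x\<in>A j. \<forall>y\<in>A j. x mod r = y mod r)"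
proof -
  define pt where "pt j = (SOME x. x \<in> A j)" for j
  have pt: "pt j \<in> A j" if "j \<in> I" for j
    unfolding pt_def using ne[OF that] by (simp add: some_in_eq)
  define T where "T j = {p. prime p \<and> (\<forall>x\<in>A j. \<not> p dvd x)}" for j
  have Tfin: "finite (T j)" if "j \<in> I" for j
    unfolding T_def using T_finite[OF opn[OF that] ne[OF that]] .
  have Tp: "prime p" if "p \<in> T j" for p j using that unfolding T_def by simp
  have Tnd: "\<not> p dvd x" if "p \<in> T j" "x \<in> A j" for p j x using that unfolding T_def by simp
  have res: "x mod p = pt j mod p" if "j \<in> I" "p \<in> T j" "x \<in> A j" for j p x
    using IS1[OF opn[OF that(1)] isx[OF that(1)] Tp[OF that(2)]] that pt[OF that(1)]
    unfolding T_def by blast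
  have fact1: "\<exists>p. p \<in> T i \<and> p \<in> T j \<and> pt i mod p \<noteq> pt j mod p"
    if ij: "i \<in> I" "j \<in> I" "i \<noteq> j" for i j
  proof (rule ccontr)
    assume H: "\<not> (\<exists>p. p \<in> T i \<and> p \<in> T j \<and> pt i mod p \<noteq> pt j mod p)"
    have pQ: "\<forall>s\<in>T j. prime s \<and> \<not> s dvd pt j" using Tp Tnd pt[OF ij(2)] by blast
    have cQ: "\<forall>s\<in>T j. (\<forall>x\<in>A i. \<not> s dvd x) \<longrightarrow> (\<exists>x\<in>A i. x mod s = pt j mod s)"
    proof (intro ballI impI)
      fix s assume s: "s \<in> T j" "\<forall>x\<in>A i. \<not> s dvd x"
      then have "s \<in> T i" unfolding T_def by simp
      then have "pt i mod s = pt j mod s" using H s(1) by blast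
      then show "\<exists>x\<in>A i. x mod s = pt j mod s" using pt[OF ij(1)] by blast
    qed
    obtain z e where ze: "basic z e" "arith_prog z e \<subseteq> A i" "\<forall>s\<in>T j. s dvd e \<and> z mod s = pt j mod s"
      using dense_IS[OF opn[OF ij(1)] ne[OF ij(1)] isx[OF ij(1)] Tfin[OF ij(2)], of "\<lambda>_. pt j"] pQ cQ
      by blast
    have "A j \<inter> arith_prog z e \<noteq> {}"
    proof (rule dense_meet[OF opn[OF ij(2)] ne[OF ij(2)] isx[OF ij(2)] ze(1)])
      fix s assume s: "prime s" "s dvd e" "\<forall>x\<in>A j. \<not> s dvd x"
      then have "s \<in> T j" unfolding T_def by simp
      then have "z mod s = pt j mod s" using ze(3) by blast
      then show "\<exists>x\<in>A j. x mod s = z mod s" using pt[OF ij(2)] by auto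
    qed
    then have "A j \<inter> A i \<noteq> {}" using ze(2) by blast
    then show False using disj[OF ij(2) ij(1)] ij(3) by blast
  qed
  have R: "r \<in> T j \<and> pt i mod r \<noteq> pt j mod r"
    if rij: "i \<in> I" "r \<in> T i" "j \<in> I" "j \<noteq> i" for i r j
  proof -
    define PP where "PP = insert r (T i \<union> T j)"
    have "finite PP" unfolding PP_def using Tfin rij by simp
    moreover have "\<forall>q\<in>PP. prime q" unfolding PP_def using Tp rij(2) by blast
    ultimately obtain z where z: "z \<ge> 1" "\<forall>s\<in>PP. z mod s = (if s = r then 0 else if s \<in> T i then pt i else 1) mod s"
      using crt[of PP 1 "\<lambda>s. if s = r then 0 else if s \<in> T i then pt i else 1"] by blast
    have rz: "r dvd z" using z(2) unfolding PP_def by (simp add: dvd_eq_mod_eq_0)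
    have zi: "z mod s = pt i mod s" if "s \<in> T i" "s \<noteq> r" for s
      using z(2) that unfolding PP_def by simp
    have nds: "\<not> s dvd z" if "s \<in> T i \<union> T j" "s \<noteq> r" for s
    proof
      assume sz: "s dvd z"
      have ps: "prime s" using that(1) Tp by blast
      show False
      proof (cases "s \<in> T i")
        case True
        then have "z mod s = pt i mod s" using zi that(2) by blast
        then have "s dvd pt i" using sz by (simp add: dvd_eq_mod_eq_0)
        then show False using Tnd[OF True pt[OF rij(1)]] by blast
      next
        case False
        then have "z mod s = 1 mod s" using z(2) that unfolding PP_def by simp
        moreover have "s > 1" using ps prime_gt_1_nat by blast
        then have "1 mod s = 1" by simp
        ultimately show False using sz by (simp add: dvd_eq_mod_eq_0)
      qed
    qed
    have notin: "\<forall>l\<in>I. z \<notin> A l"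
    proof
      fix l assume "l \<in> I"
      show "z \<notin> A l"
      proof
        assume zl: "z \<in> A l"
        show False
        proof (cases "l = i")
          case True
          then show False using Tnd[OF rij(2)] zl rz by blast
        next
          case False
          obtain e where e: "basic z e" "arith_prog z e \<subseteq> A l" using open_nbhd[OF opn[OF \<open>l \<in> I\<close>] zl] by blast
          have "A i \<inter> arith_prog z e \<noteq> {}"
          proof (rule dense_meet[OF opn[OF rij(1)] ne[OF rij(1)] isx[OF rij(1)] e(1)])
            fix s assume s: "prime s" "s dvd e" "\<forall>x\<in>A i. \<not> s dvd x"
            then have "s \<in> T i" unfolding T_def by simp
            have "\<not> s dvd z" using basic_ndvd[OF e(1) s(1) s(2)] .
            then have "s \<noteq> r" using rz by blast
            then have "z mod s = pt i mod s" using zi \<open>s \<in> T i\<close> by blast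
            then show "\<exists>x\<in>A i. x mod s = z mod s" using pt[OF rij(1)] by auto
          qed
          then have "A i \<inter> A l \<noteq> {}" using e(2) by blast
          then show False using disj[OF rij(1) \<open>l \<in> I\<close>] False by blast
        qed
      qed
    qed
    have zcl: "z \<in> KT closure_of (A j)" using cov[OF z(1) notin rij(3)] .
    have zj: "z mod s = pt j mod s" if "s \<in> T j" "s \<noteq> r" for s
    proof -
      have "\<not> s dvd z" using nds that by blast
      moreover have "\<forall>y\<in>A j. y mod s = pt j mod s" using res[OF rij(3) that(1)] by blast
      ultimately show ?thesis using CL1[OF zcl Tp[OF that(1)]] by blast
    qed
    obtain p where p: "p \<in> T i" "p \<in> T j" "pt i mod p \<noteq> pt j mod p" using fact1[OF rij(1) rij(3)] rij(4) by metis
    have "p = r"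
    proof (rule ccontr)
      assume "p \<noteq> r"
      then have "z mod p = pt i mod p" "z mod p = pt j mod p" using zi zj p by blast+
      then show False using p(3) by simp
    qed
    then show ?thesis using p by blast
  qed
  obtain r where r: "r \<in> T i0" using fact1[OF two] by blast
  have rT: "r \<in> T j" if "j \<in> I" for j
  proof (cases "j = i0")
    case True then show ?thesis using r by simp
  next
    case False then show ?thesis using R[OF two(1) r that] by blast
  qed
  have "prime r" using Tp r by blast
  moreover have "\<forall>j\<in>I. \<forall>x\<in>A j. \<not> r dvd x" using rT Tnd by blast
  moreover have "\<forall>i\<in>I. \<forall>j\<in>I. i \<noteq> j \<longrightarrow> (\<forall>x\<in>A i. \<forall>y\<in>A j. x mod r \<noteq> y mod r)"
  proof (intro ballI impI)
    fix i j x y assume ij: "i \<in> I" "j \<in> I" "i \<noteq> j" and xy: "x \<in> A i" "y \<in> A j"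
    have "pt i mod r \<noteq> pt j mod r" using R[OF ij(1) rT[OF ij(1)] ij(2)] ij(3) by blast
    moreover have "x mod r = pt i mod r" using res[OF ij(1) rT[OF ij(1)] xy(1)] .
    moreover have "y mod r = pt j mod r" using res[OF ij(2) rT[OF ij(2)] xy(2)] .
    ultimately show "x mod r \<noteq> y mod r" by simp
  qed
  moreover have "\<forall>j\<in>I. \<forall>x\<in>A j. \<forall>y\<in>A j. x mod r = y mod r"
  proof (intro ballI)
    fix j x y assume "j \<in> I" "x \<in> A j" "y \<in> A j"
    then show "x mod r = y mod r" using res[OF \<open>j \<in> I\<close> rT[OF \<open>j \<in> I\<close>]] by metis
  qed
  ultimately show ?thesis by blast
qed




lemma cls_basic: "prime q \<Longrightarrow> 1 \<le> j \<Longrightarrow> j < q \<Longrightarrow> basic j q"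
proof -
  assume q: "prime q" "1 \<le> j" "j < q"
  have "\<not> q dvd j"
  proof
    assume "q dvd j"
    then have "q \<le> j" using dvd_imp_le q(2) by simp
    then show False using q(3) by simp
  qed
  then have "coprime j q" using prime_imp_coprime[OF q(1)] by (simp add: coprime_commute)
  moreover have "q \<ge> 1" using q by simp
  ultimately show ?thesis using q squarefree_prime unfolding basic_def by simp
qed

lemma cls_mem: "q > 0 \<Longrightarrow> j < q \<Longrightarrow> x \<in> arith_prog j q \<longleftrightarrow> x mod q = j"
proof -
  assume "q > 0" "j < q"
  have "x \<in> arith_prog j q \<longleftrightarrow> j \<le> x \<and> x mod q = j mod q" using ap_mem[OF \<open>q > 0\<close>] .
  also have "\<dots> \<longleftrightarrow> x mod q = j" using \<open>j < q\<close> mod_less_eq_dividend[of x q] by auto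
  finally show ?thesis .
qed

lemma cls_mult_closure:
  assumes q: "prime q" "1 \<le> j" "j < q" and x: "1 \<le> x" "q dvd x"
  shows "x \<in> KT closure_of arith_prog j q"
proof (rule CL2[OF cls_basic[OF q] x(1)])
  fix p assume "prime p" "p dvd q" "\<not> p dvd x"
  then have "p = q" using q(1) primes_dvd_imp_eq by blast
  then show "x mod p = j mod p" using x(2) \<open>\<not> p dvd x\<close> by blast
qed

lemma homeo_facts:
  assumes hg: "homeomorphic_maps KT KT h g"
  shows "homeomorphic_map KT KT h" "homeomorphic_map KT KT g"
    "\<And>x. 1 \<le> x \<Longrightarrow> g (h x) = x" "\<And>y. 1 \<le> y \<Longrightarrow> h (g y) = y"
    "\<And>x. 1 \<le> x \<Longrightarrow> 1 \<le> h x" "\<And>y. 1 \<le> y \<Longrightarrow> 1 \<le> g y"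
proof -
  show hm: "homeomorphic_map KT KT h" using hg homeomorphic_maps_imp_map by blast
  show gm: "homeomorphic_map KT KT g" using hg homeomorphic_maps_sym homeomorphic_maps_imp_map by blast
  show "\<And>x. 1 \<le> x \<Longrightarrow> g (h x) = x" using hg unfolding homeomorphic_maps_def by (simp add: topspace_KT)
  show "\<And>y. 1 \<le> y \<Longrightarrow> h (g y) = y" using hg unfolding homeomorphic_maps_def by (simp add: topspace_KT)
  have ch: "continuous_map KT KT h" and cg: "continuous_map KT KT g"
    using hg unfolding homeomorphic_maps_def by auto
  show "\<And>x. 1 \<le> x \<Longrightarrow> 1 \<le> h x"
    using continuous_map_image_subset_topspace[OF ch] by (auto simp: topspace_KT)
  show "\<And>y. 1 \<le> y \<Longrightarrow> 1 \<le> g y"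
    using continuous_map_image_subset_topspace[OF cg] by (auto simp: topspace_KT)
qed

lemma class_image:
  assumes hg: "homeomorphic_maps KT KT h g" and q: "prime q" "q > 2"
  shows "\<exists>r b. prime r \<and> inj_on b {1..<q} \<and>
           (\<forall>j\<in>{1..<q}. b j \<in> {1..<r} \<and> h ` arith_prog j q \<subseteq> arith_prog (b j) r)"
proof -
  note hf = homeo_facts[OF hg]
  have q0: "q > 0" using q by simp
  define I where "I = {1..<q}"
  define A where "A j = h ` arith_prog j q" for j
  have bj: "basic j q" if "j \<in> I" for j using cls_basic[OF q(1)] that unfolding I_def by auto
  have apt: "arith_prog j q \<subseteq> topspace KT" if "j \<in> I" for j
    using open_sub[OF basic_open[OF bj[OF that]]] by (simp add: topspace_KT)
  have opn: "openin KT (A j)" if "j \<in> I" for j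
    unfolding A_def using homeomorphic_map_openness[OF hf(1) apt[OF that]] basic_open[OF bj[OF that]] by simp
  have ne: "A j \<noteq> {}" if "j \<in> I" for j unfolding A_def using ap_self by blast
  have isx: "IS (A j)" if "j \<in> I" for j
    unfolding A_def using IS_homeo[OF hg apt[OF that] basic_IS[OF bj[OF that]]] .
  have memI: "x \<in> arith_prog j q \<longleftrightarrow> x mod q = j" if "j \<in> I" for j x
    using cls_mem[OF q0] that unfolding I_def by simp
  have ge1: "1 \<le> x" if "x \<in> arith_prog j q" "j \<in> I" for j x
    using basic_ge1[OF bj[OF that(2)] that(1)] .
  have disj: "A i \<inter> A j = {}" if "i \<in> I" "j \<in> I" "i \<noteq> j" for i j
  proof (rule ccontr)
    assume "A i \<inter> A j \<noteq> {}"
    then obtain x1 x2 where x: "x1 \<in> arith_prog i q" "x2 \<in> arith_prog j q" "h x1 = h x2"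
      unfolding A_def by blast
    have "x1 = g (h x1)" using hf(3) ge1[OF x(1) that(1)] by simp
    also have "\<dots> = g (h x2)" using x(3) by simp
    also have "\<dots> = x2" using hf(3) ge1[OF x(2) that(2)] by simp
    finally have "x1 = x2" .
    then show False using x(1,2) memI that by simp
  qed
  have cov: "z \<in> KT closure_of (A j)" if z: "1 \<le> z" "\<forall>l\<in>I. z \<notin> A l" and j: "j \<in> I" for z j
  proof -
    define x where "x = g z"
    have x1: "1 \<le> x" unfolding x_def using hf(6) z(1) by blast
    have hx: "h x = z" unfolding x_def using hf(4) z(1) by blast
    have "q dvd x"
    proof (rule ccontr)
      assume "\<not> q dvd x"
      then have "x mod q \<in> I" unfolding I_def using q0 by (simp add: dvd_eq_mod_eq_0)
      moreover have "x \<in> arith_prog (x mod q) q" using memI calculation by simp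
      ultimately have "z \<in> A (x mod q)" unfolding A_def using hx by blast
      then show False using z(2) \<open>x mod q \<in> I\<close> by blast
    qed
    then have "x \<in> KT closure_of arith_prog j q"
      using cls_mult_closure[OF q(1)] j x1 unfolding I_def by simp
    then have "h x \<in> h ` (KT closure_of arith_prog j q)" by blast
    then have "h x \<in> KT closure_of (h ` arith_prog j q)"
      using homeomorphic_map_closure_of[OF hf(1) apt[OF j]] by simp
    then show ?thesis unfolding A_def using hx by simp
  qed
  have "1 \<in> I" "2 \<in> I" unfolding I_def using q by auto
  have "\<exists>r. prime r \<and> (\<forall>j\<in>I. \<forall>x\<in>A j. \<not> r dvd x) \<and>
    (\<forall>i\<in>I. \<forall>j\<in>I. i \<noteq> j \<longrightarrow> (\<forall>x\<in>A i. \<forall>y\<in>A j. x mod r \<noteq> y mod r)) \<and>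
    (\<forall>j\<in>I. \<forall>x\<in>A j. \<forall>y\<in>A j. x mod r = y mod r)"
  proof (rule decode[of I A 1 2])
    show "\<And>j. j \<in> I \<Longrightarrow> openin KT (A j)" by (rule opn)
    show "\<And>j. j \<in> I \<Longrightarrow> A j \<noteq> {}" by (rule ne)
    show "\<And>j. j \<in> I \<Longrightarrow> IS (A j)" by (rule isx)
    show "\<And>i j. i \<in> I \<Longrightarrow> j \<in> I \<Longrightarrow> i \<noteq> j \<Longrightarrow> A i \<inter> A j = {}" by (rule disj)
    show "\<And>z j. 1 \<le> z \<Longrightarrow> \<forall>l\<in>I. z \<notin> A l \<Longrightarrow> j \<in> I \<Longrightarrow> z \<in> KT closure_of A j" by (rule cov)
    show "1 \<in> I" "2 \<in> I" "(1::nat) \<noteq> 2" using \<open>1 \<in> I\<close> \<open>2 \<in> I\<close> by auto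
  qed
  then obtain r where r: "prime r" "\<forall>j\<in>I. \<forall>x\<in>A j. \<not> r dvd x"
      "\<forall>i\<in>I. \<forall>j\<in>I. i \<noteq> j \<longrightarrow> (\<forall>x\<in>A i. \<forall>y\<in>A j. x mod r \<noteq> y mod r)"
      "\<forall>j\<in>I. \<forall>x\<in>A j. \<forall>y\<in>A j. x mod r = y mod r"
    by blast
  have r0: "r > 0" using r(1) prime_gt_0_nat by blast
  define b where "b j = h j mod r" for j
  have hjA: "h j \<in> A j" if "j \<in> I" for j unfolding A_def using ap_self by blast
  have "inj_on b I"
  proof (rule inj_onI)
    fix i j assume ij: "i \<in> I" "j \<in> I" "b i = b j"
    show "i = j"
    proof (rule ccontr)
      assume "i \<noteq> j"
      then have "h i mod r \<noteq> h j mod r" using r(3) ij(1,2) hjA[OF ij(1)] hjA[OF ij(2)] by blast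
      then show False using ij(3) unfolding b_def by simp
    qed
  qed
  moreover have B: "\<forall>j\<in>I. b j \<in> {1..<r} \<and> h ` arith_prog j q \<subseteq> arith_prog (b j) r"
  proof
    fix j assume j: "j \<in> I"
    have nd: "\<not> r dvd h j" using r(2) hjA[OF j] j by blast
    then have "h j mod r \<noteq> 0" by (simp add: dvd_eq_mod_eq_0)
    then have l1: "1 \<le> b j" unfolding b_def by simp
    have l2: "b j < r" unfolding b_def using r0 by simp
    have bj1: "b j \<in> {1..<r}" using l1 l2 by simp
    have sub: "h ` arith_prog j q \<subseteq> arith_prog (b j) r"
    proof
      fix y assume y: "y \<in> h ` arith_prog j q"
      then have "y \<in> A j" unfolding A_def by simp
      then have "y mod r = h j mod r" using r(4) hjA[OF j] j by blast
      then have "y mod r = b j" unfolding b_def .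
      then show "y \<in> arith_prog (b j) r" using cls_mem[OF r0 l2] by simp
    qed
    show "b j \<in> {1..<r} \<and> h ` arith_prog j q \<subseteq> arith_prog (b j) r" using bj1 sub by blast
  qed
  ultimately have i1: "inj_on b {1..<q}" and i2: "\<forall>j\<in>{1..<q}. b j \<in> {1..<r} \<and> h ` arith_prog j q \<subseteq> arith_prog (b j) r"
    unfolding I_def by blast+
  show ?thesis using r(1) i1 i2 by blast
qed

lemma sub_cls:
  assumes q: "prime q" "1 \<le> j" "j < q" and r: "prime r" "1 \<le> c" "c < r"
    and sub: "arith_prog j q \<subseteq> arith_prog c r"
  shows "q = r \<and> j = c"
proof -
  have q0: "q > 0" and r0: "r > 0" using q r prime_gt_0_nat by blast+
  have "q = r"
  proof (rule ccontr)
    assume "q \<noteq> r"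
    have "finite {q, r}" by simp
    moreover have "\<forall>p\<in>{q, r}. prime p" using q r by simp
    ultimately obtain x where x: "x \<ge> 1" "\<forall>p\<in>{q,r}. x mod p = (if p = q then j else 0) mod p"
      using crt[of "{q,r}" 1 "\<lambda>p. if p = q then j else 0"] by blast
    have "x mod q = j" using x(2) q(3) by simp
    then have "x \<in> arith_prog j q" using cls_mem[OF q0 q(3)] by simp
    then have "x \<in> arith_prog c r" using sub by blast
    then have "x mod r = c" using cls_mem[OF r0 r(3)] by simp
    moreover have "x mod r = 0" using x(2) \<open>q \<noteq> r\<close> by simp
    ultimately show False using r(2) by simp
  qed
  moreover have "j \<in> arith_prog c r" using sub ap_self by blast
  then have "j mod r = c" using cls_mem[OF r0 r(3)] by simp
  then have "j = c" using \<open>q = r\<close> q(3) by simp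
  ultimately show ?thesis by blast
qed

lemma class_perm:
  assumes hg: "homeomorphic_maps KT KT h g" and q: "prime q" "q > 2"
  shows "\<exists>\<sigma>. inj_on \<sigma> {1..<q} \<and> \<sigma> ` {1..<q} = {1..<q} \<and>
           (\<forall>j\<in>{1..<q}. h ` arith_prog j q = arith_prog (\<sigma> j) q)"
proof -
  note hf = homeo_facts[OF hg]
  have hg': "homeomorphic_maps KT KT g h" using hg homeomorphic_maps_sym by blast
  obtain r b where rb: "prime r" "inj_on b {1..<q}"
      "\<forall>j\<in>{1..<q}. b j \<in> {1..<r} \<and> h ` arith_prog j q \<subseteq> arith_prog (b j) r"
    using class_image[OF hg q] by blast
  have bsub: "b ` {1..<q} \<subseteq> {1..<r}" using rb(3) by blast
  have "card {1..<q} \<le> card {1..<r}" using card_inj_on_le[OF rb(2) bsub] by simp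
  then have qr: "q \<le> r" using q by simp
  then have r2: "r > 2" using q by simp
  obtain r' b' where rb': "prime r'" "inj_on b' {1..<r}"
      "\<forall>j\<in>{1..<r}. b' j \<in> {1..<r'} \<and> g ` arith_prog j r \<subseteq> arith_prog (b' j) r'"
    using class_image[OF hg' rb(1) r2] by blast
  have chain: "arith_prog j q \<subseteq> arith_prog (b' (b j)) r'" if j: "j \<in> {1..<q}" for j
  proof
    fix x assume x: "x \<in> arith_prog j q"
    have bjq: "basic j q" using cls_basic[OF q(1)] j by simp
    have "1 \<le> x" using basic_ge1[OF bjq x] .
    have "h x \<in> arith_prog (b j) r" using rb(3) j x by blast
    moreover have "b j \<in> {1..<r}" using rb(3) j by blast
    ultimately have "g (h x) \<in> arith_prog (b' (b j)) r'" using rb'(3) by blast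
    then show "x \<in> arith_prog (b' (b j)) r'" using hf(3)[OF \<open>1 \<le> x\<close>] by simp
  qed
  have eq: "r' = q \<and> b' (b j) = j" if j: "j \<in> {1..<q}" for j
  proof -
    have "b j \<in> {1..<r}" using rb(3) j by blast
    then have "b' (b j) \<in> {1..<r'}" using rb'(3) by blast
    then have "q = r' \<and> j = b' (b j)"
      using sub_cls[OF q(1) _ _ rb'(1) _ _ chain[OF j]] j by simp
    then show ?thesis by simp
  qed
  have "1 \<in> {1..<q}" using q by simp
  then have rq': "r' = q" using eq by blast
  have b'sub: "b' ` {1..<r} \<subseteq> {1..<q}" using rb'(3) rq' by blast
  have "card {1..<r} \<le> card {1..<q}" using card_inj_on_le[OF rb'(2) b'sub] by simp
  then have "r \<le> q" using r2 by simp
  then have rq: "r = q" using qr by simp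
  have bim: "b ` {1..<q} = {1..<q}"
    using endo_inj_surj[of "{1..<q}" b] bsub rb(2) rq by simp
  have "\<forall>j\<in>{1..<q}. h ` arith_prog j q = arith_prog (b j) q"
  proof
    fix j assume j: "j \<in> {1..<q}"
    have s1: "h ` arith_prog j q \<subseteq> arith_prog (b j) q" using rb(3) j rq by simp
    have s2: "arith_prog (b j) q \<subseteq> h ` arith_prog j q"
    proof
      fix y assume y: "y \<in> arith_prog (b j) q"
      have bj: "b j \<in> {1..<q}" using bim j by blast
      have "basic (b j) q" using cls_basic[OF q(1)] bj by simp
      then have "1 \<le> y" using basic_ge1 y by blast
      have "g y \<in> arith_prog (b' (b j)) r'" using rb'(3) bj y rq by blast
      then have "g y \<in> arith_prog j q" using eq[OF j] by simp
      moreover have "h (g y) = y" using hf(4)[OF \<open>1 \<le> y\<close>] .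
      ultimately show "y \<in> h ` arith_prog j q" by (metis image_eqI)
    qed
    show "h ` arith_prog j q = arith_prog (b j) q" using s1 s2 by blast
  qed
  then show ?thesis using rb(2) bim by blast
qed

lemma div_res_pres:
  assumes hg: "homeomorphic_maps KT KT h g" and q: "prime q" "q > 2"
  shows "\<forall>x. 1 \<le> x \<longrightarrow> (q dvd h x \<longleftrightarrow> q dvd x)"
    "\<forall>x y. 1 \<le> x \<longrightarrow> 1 \<le> y \<longrightarrow> \<not> q dvd x \<longrightarrow> \<not> q dvd y \<longrightarrow>
        (h x mod q = h y mod q \<longleftrightarrow> x mod q = y mod q)"
proof -
  note hf = homeo_facts[OF hg]
  have q0: "q > 0" using q by simp
  obtain \<sigma> where s: "inj_on \<sigma> {1..<q}" "\<sigma> ` {1..<q} = {1..<q}"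
      "\<forall>j\<in>{1..<q}. h ` arith_prog j q = arith_prog (\<sigma> j) q"
    using class_perm[OF hg q] by blast
  have nd: "h x mod q = \<sigma> (x mod q) \<and> x mod q \<in> {1..<q}" if x: "1 \<le> x" "\<not> q dvd x" for x
  proof -
    define j where "j = x mod q"
    have j: "j \<in> {1..<q}" unfolding j_def using x(2) q0 by (simp add: dvd_eq_mod_eq_0 Suc_le_eq)
    have "x \<in> arith_prog j q" using cls_mem[OF q0] j unfolding j_def by simp
    then have "h x \<in> arith_prog (\<sigma> j) q" using s(3) j by blast
    moreover have "\<sigma> j \<in> {1..<q}" using s(2) j by blast
    ultimately have "h x mod q = \<sigma> j" using cls_mem[OF q0] by simp
    then show ?thesis using j unfolding j_def by simp
  qed
  show "\<forall>x. 1 \<le> x \<longrightarrow> (q dvd h x \<longleftrightarrow> q dvd x)"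
  proof (intro allI impI)
    fix x :: nat assume x: "1 \<le> x"
    show "q dvd h x \<longleftrightarrow> q dvd x"
    proof
      assume qhx: "q dvd h x"
      show "q dvd x"
      proof (rule ccontr)
        assume "\<not> q dvd x"
        then have "h x mod q = \<sigma> (x mod q)" "x mod q \<in> {1..<q}" using nd x by blast+
        then have "h x mod q \<in> {1..<q}" using s(2) by blast
        then show False using qhx by (simp add: dvd_eq_mod_eq_0)
      qed
    next
      assume qx: "q dvd x"
      show "q dvd h x"
      proof (rule ccontr)
        assume nqh: "\<not> q dvd h x"
        define c where "c = h x mod q"
        have c: "c \<in> {1..<q}" unfolding c_def using nqh q0 by (simp add: dvd_eq_mod_eq_0 Suc_le_eq)
        then obtain j where j: "j \<in> {1..<q}" "c = \<sigma> j" using s(2) by (metis imageE)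
        have "h x \<in> arith_prog c q" using cls_mem[OF q0] c unfolding c_def by simp
        then have "h x \<in> h ` arith_prog j q" using s(3) j by simp
        then obtain x' where x': "x' \<in> arith_prog j q" "h x' = h x" by (metis imageE)
        have "basic j q" using cls_basic[OF q(1)] j(1) by simp
        then have "1 \<le> x'" using basic_ge1 x'(1) by blast
        have "x' = x" using hf(3)[OF \<open>1 \<le> x'\<close>] hf(3)[OF x] x'(2) by metis
        then have "x mod q = j" using x'(1) cls_mem[OF q0] j(1) by simp
        then show False using qx j(1) by (simp add: dvd_eq_mod_eq_0)
      qed
    qed
  qed
  show "\<forall>x y. 1 \<le> x \<longrightarrow> 1 \<le> y \<longrightarrow> \<not> q dvd x \<longrightarrow> \<not> q dvd y \<longrightarrow>
        (h x mod q = h y mod q \<longleftrightarrow> x mod q = y mod q)"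
  proof (intro allI impI)
    fix x y :: nat assume xy: "1 \<le> x" "1 \<le> y" "\<not> q dvd x" "\<not> q dvd y"
    have hx: "h x mod q = \<sigma> (x mod q)" "x mod q \<in> {1..<q}" using nd xy(1,3) by blast+
    have hy: "h y mod q = \<sigma> (y mod q)" "y mod q \<in> {1..<q}" using nd xy(2,4) by blast+
    show "h x mod q = h y mod q \<longleftrightarrow> x mod q = y mod q"
      using hx hy s(1) by (metis inj_on_eq_iff)
  qed
qed

definition SRpt :: "nat \<Rightarrow> bool" where
  "SRpt x \<longleftrightarrow> (\<forall>N. openin KT N \<longrightarrow> x \<in> N \<longrightarrow>
      (\<exists>N'. openin KT N' \<and> x \<in> N' \<and> KT interior_of (KT closure_of N') \<subseteq> N))"

lemma in_interior_KT:
  assumes "w \<in> KT interior_of S"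
  obtains f where "basic w f" "arith_prog w f \<subseteq> S"
proof -
  obtain T where T: "openin KT T" "w \<in> T" "T \<subseteq> S" using assms unfolding interior_of_def by blast
  obtain f where "basic w f" "arith_prog w f \<subseteq> T" using open_nbhd[OF T(1,2)] by blast
  then show ?thesis using that T(3) by blast
qed

lemma even_SR:
  assumes x: "1 \<le> x" "even x"
  shows "SRpt x"
  unfolding SRpt_def
proof (intro allI impI)
  fix N assume N: "openin KT N" "x \<in> N"
  obtain d where d: "basic x d" "arith_prog x d \<subseteq> N" using open_nbhd[OF N] by blast
  have d0: "d > 0" using d(1) basic_pos by blast
  have cxd: "coprime x d" using d(1) basic_def by blast
  have odd_d: "\<not> 2 dvd d"
  proof
    assume "2 dvd d"
    then have "is_unit (2::nat)" using coprime_common_divisor[OF cxd] x(2) by blast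
    then show False by simp
  qed
  obtain P where P: "prime P" "x + d < P" using bigger_prime by blast
  have P3: "P \<noteq> 2"
  proof
    assume "P = 2" then have "x + d < 2" using P by simp
    then show False using x d0 by simp
  qed
  have nPd: "\<not> P dvd d"
  proof
    assume "P dvd d" then have "P \<le> d" using dvd_imp_le d0 by blast
    then show False using P by simp
  qed
  have nPx: "\<not> P dvd x"
  proof
    assume "P dvd x" then have "P \<le> x" using dvd_imp_le x(1) by simp
    then show False using P by simp
  qed
  define E where "E = d * P"
  have E0: "E > 0" unfolding E_def using d0 P(1) prime_gt_0_nat by simp
  have "coprime x P" using prime_imp_coprime[OF P(1) nPx] by (simp add: coprime_commute)
  then have cxE: "coprime x E" unfolding E_def using cxd by simp
  have "coprime d P" using prime_imp_coprime[OF P(1) nPd] by (simp add: coprime_commute)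
  then have sE: "squarefree E" unfolding E_def
    using squarefree_mult_coprime d(1) squarefree_prime[OF P(1)] unfolding basic_def by blast
  have bE: "basic x E" using x(1) E0 cxE sE unfolding basic_def by simp
  define N' where "N' = arith_prog x E"
  have oN': "openin KT N'" unfolding N'_def using bE by (rule basic_open)
  have xN': "x \<in> N'" unfolding N'_def by (rule ap_self)
  have "d dvd E" unfolding E_def by simp
  have N'sub: "N' \<subseteq> arith_prog x d" unfolding N'_def by (rule ap_sub[OF \<open>d dvd E\<close> ap_self d0 E0])
  have "P \<le> d * P" using d0 by simp
  moreover have "x < P" using P(2) by simp
  ultimately have xE: "x < E" unfolding E_def using less_le_trans by blast
  have "KT interior_of (KT closure_of N') \<subseteq> N'"
  proof
    fix w assume w: "w \<in> KT interior_of (KT closure_of N')"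
    obtain f where f: "basic w f" "arith_prog w f \<subseteq> KT closure_of N'" using in_interior_KT[OF w] by blast
    have f0: "f > 0" using f(1) basic_pos by blast
    have wcl: "w \<in> KT closure_of N'" using f(2) ap_self by blast
    have "w mod E = x mod E"
    proof (rule sqf_mod[OF sE])
      fix p assume p: "prime p" "p dvd E"
      have p2: "p \<noteq> 2"
      proof
        assume "p = 2"
        then have "p dvd d \<or> p dvd P" using p(2) prime_dvd_mult_iff[OF p(1)] unfolding E_def by blast
        moreover have "\<not> 2 dvd P"
        proof
          assume "2 dvd P"
          then have "2 = P" using primes_dvd_imp_eq[OF two_is_prime_nat P(1)] by blast
          then show False using P3 by simp
        qed
        ultimately show False using odd_d \<open>p = 2\<close> by blast
      qed
      have "p \<ge> 2" using p(1) prime_ge_2_nat by blast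
      then have p3: "p > 2" using p2 by simp
      have res: "\<forall>y\<in>N'. y mod p = x mod p" unfolding N'_def using ap_mod_p[OF bE _ p(2)] by blast
      show "w mod p = x mod p"
      proof (cases "p dvd w")
        case False
        show ?thesis by (rule CL1[OF wcl p(1) False res])
      next
        case True
        have npf: "\<not> p dvd f" using basic_ndvd[OF f(1) p(1)] True by blast
        define t where "t = (if x mod p = 1 then 2 else 1::nat)"
        have t: "t \<noteq> x mod p" "0 < t" "t < p" unfolding t_def using p3 by auto
        define PP where "PP = insert p {q. prime q \<and> q dvd f}"
        have "finite PP" unfolding PP_def using finite_prime_divs[OF f0] by simp
        moreover have "\<forall>q\<in>PP. prime q" unfolding PP_def using p(1) by simp
        ultimately obtain v where v: "v \<ge> w" "\<forall>q\<in>PP. v mod q = (if q = p then t else w) mod q"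
          using crt[of PP w "\<lambda>q. if q = p then t else w"] by blast
        have "v mod f = w mod f"
        proof (rule sqf_mod)
          show "squarefree f" using f(1) basic_def by blast
        next
          fix q assume "prime q" "q dvd f"
          then have "q \<in> PP" "q \<noteq> p" unfolding PP_def using npf by auto
          then show "v mod q = w mod q" using v(2) by simp
        qed
        then have "v \<in> arith_prog w f" using ap_mem[OF f0] v(1) by blast
        then have vcl: "v \<in> KT closure_of N'" using f(2) by blast
        have vp: "v mod p = t" using v(2) t(3) unfolding PP_def by simp
        then have "\<not> p dvd v" using t(2) by (simp add: dvd_eq_mod_eq_0)
        then have "v mod p = x mod p" using CL1[OF vcl p(1) _ res] by blast
        then show ?thesis using vp t(1) by simp
      qed
    qed
    then have "w mod E = x" using xE by simp
    then have "x \<le> w" using mod_less_eq_dividend[of w E] by simp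
    moreover have "w mod E = x mod E" using \<open>w mod E = x\<close> xE by simp
    ultimately show "w \<in> N'" unfolding N'_def using ap_mem[OF E0] by blast
  qed
  then have "KT interior_of (KT closure_of N') \<subseteq> N" using N'sub d(2) by blast
  then show "\<exists>N'. openin KT N' \<and> x \<in> N' \<and> KT interior_of (KT closure_of N') \<subseteq> N"
    using oN' xN' by blast
qed

lemma odd_not_SR:
  assumes x: "1 \<le> x" "odd x"
  shows "\<not> SRpt x"
proof
  assume sr: "SRpt x"
  have b2: "basic x 2" using basic_prime[OF two_is_prime_nat _ x(1)] x(2) by blast
  define N where "N = arith_prog x 2"
  have "openin KT N" "x \<in> N" unfolding N_def using basic_open[OF b2] ap_self by auto
  then obtain N' where N': "openin KT N'" "x \<in> N'" "KT interior_of (KT closure_of N') \<subseteq> N"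
    using sr unfolding SRpt_def by blast
  obtain d where d: "basic x d" "arith_prog x d \<subseteq> N'" using open_nbhd[OF N'(1,2)] by blast
  have d0: "d > 0" using d(1) basic_pos by blast
  define D where "D = (if even d then d div 2 else d)"
  have Dd: "D dvd d" unfolding D_def by auto
  have D0: "D > 0" unfolding D_def using d0 by (auto elim: evenE)
  have oddD: "odd D"
  proof
    assume eD: "even D"
    show False
    proof (cases "even d")
      case True
      then have "d = 2 * D" unfolding D_def by simp
      then have "4 dvd d" using eD by auto
      then have "2\<^sup>2 dvd d" by simp
      then have "(2::nat) dvd 1" using squarefreeD d(1) unfolding basic_def by blast
      then show False by simp
    next
      case False
      then show False using eD unfolding D_def by simp
    qed
  qed
  have sD: "squarefree D" using squarefree_mono[OF Dd] d(1) unfolding basic_def by blast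
  define w where "w = x + D"
  have cxd: "coprime x d" using d(1) basic_def by blast
  have cxD: "coprime x D" using cxd Dd by (meson coprime_divisors dvd_refl)
  have "gcd w D = gcd x D" unfolding w_def by (simp add: gcd_add1)
  then have cwD: "coprime w D" using cxD by (simp add: coprime_iff_gcd_eq_1)
  have bw: "basic w D" using cwD sD D0 unfolding basic_def w_def by simp
  have sub: "arith_prog w D \<subseteq> KT closure_of N'"
  proof
    fix v assume v: "v \<in> arith_prog w D"
    have "1 \<le> v" using basic_ge1[OF bw v] .
    have "v \<in> KT closure_of arith_prog x d"
    proof (rule CL2[OF d(1) \<open>1 \<le> v\<close>])
      fix p assume p: "prime p" "p dvd d" "\<not> p dvd v"
      show "v mod p = x mod p"
      proof (cases "p = 2")
        case True
        then show ?thesis using p(3) x(2) by (simp add: odd_iff_mod_2_eq_one)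
      next
        case False
        have "p dvd D"
        proof (cases "even d")
          case True
          then have "d = 2 * D" unfolding D_def by simp
          then have "p dvd 2 * D" using p(2) by simp
          then have "p dvd 2 \<or> p dvd D" using p(1) prime_dvd_mult_iff by blast
          moreover have "\<not> p dvd 2" using False p(1) primes_dvd_imp_eq two_is_prime_nat by blast
          ultimately show ?thesis by blast
        next
          case False
          then show ?thesis using p(2) unfolding D_def by simp
        qed
        have "v mod D = w mod D" using v ap_mem D0 by blast
        then have "v mod p = w mod p" using mod_dvd_eq[OF \<open>p dvd D\<close>] by blast
        also have "\<dots> = x mod p" unfolding w_def using \<open>p dvd D\<close>
          by (metis dvd_imp_mod_0 mod_add_right_eq add.right_neutral)
        finally show ?thesis .
      qed
    qed
    then show "v \<in> KT closure_of N'" using closure_of_mono[OF d(2)] by blast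
  qed
  have "w \<in> KT interior_of (KT closure_of N')"
    unfolding interior_of_def using basic_open[OF bw] ap_self sub by blast
  then have "w \<in> N" using N'(3) by blast
  then have "w mod 2 = x mod 2" unfolding N_def using ap_mem[of 2] by simp
  then show False unfolding w_def using oddD x(2) by presburger
qed

lemma SR_homeo:
  assumes hg: "homeomorphic_maps KT KT h g" and x: "1 \<le> x" and sr: "SRpt x"
  shows "SRpt (h x)"
  unfolding SRpt_def
proof (intro allI impI)
  note hf = homeo_facts[OF hg]
  fix N assume N: "openin KT N" "h x \<in> N"
  have Nt: "N \<subseteq> topspace KT" using N(1) openin_subset by blast
  have oG: "openin KT (g ` N)" using homeomorphic_map_openness[OF hf(2) Nt] N(1) by simp
  have "x \<in> g ` N" using hf(3)[OF x] N(2) by (metis image_eqI)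
  then obtain N' where N': "openin KT N'" "x \<in> N'" "KT interior_of (KT closure_of N') \<subseteq> g ` N"
    using sr oG unfolding SRpt_def by blast
  have N't: "N' \<subseteq> topspace KT" using N'(1) openin_subset by blast
  have oH: "openin KT (h ` N')" using homeomorphic_map_openness[OF hf(1) N't] N'(1) by simp
  have clt: "KT closure_of N' \<subseteq> topspace KT" by (rule closure_of_subset_topspace)
  have "KT interior_of (KT closure_of (h ` N')) = KT interior_of (h ` (KT closure_of N'))"
    using homeomorphic_map_closure_of[OF hf(1) N't] by simp
  also have "\<dots> = h ` (KT interior_of (KT closure_of N'))"
    using homeomorphic_map_interior_of[OF hf(1) clt] by simp
  also have "\<dots> \<subseteq> h ` g ` N" using N'(3) by blast
  also have "\<dots> = N"
  proof -
    have "\<forall>y\<in>N. h (g y) = y" using hf(4) Nt by (auto simp: topspace_KT)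
    then show ?thesis by (force simp: image_image)
  qed
  finally have "KT interior_of (KT closure_of (h ` N')) \<subseteq> N" .
  moreover have "h x \<in> h ` N'" using N'(2) by blast
  ultimately show "\<exists>N'. openin KT N' \<and> h x \<in> N' \<and> KT interior_of (KT closure_of N') \<subseteq> N"
    using oH by blast
qed

lemma even_pres:
  assumes hg: "homeomorphic_maps KT KT h g" and x: "1 \<le> x"
  shows "even (h x) \<longleftrightarrow> even x"
proof -
  note hf = homeo_facts[OF hg]
  have hg': "homeomorphic_maps KT KT g h" using hg homeomorphic_maps_sym by blast
  have hx1: "1 \<le> h x" using hf(5)[OF x] .
  show ?thesis
  proof
    assume eh: "even (h x)"
    show "even x"
    proof (rule ccontr)
      assume "odd x"
      have "SRpt (h x)" using even_SR[OF hx1 eh] .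
      then have "SRpt (g (h x))" using SR_homeo[OF hg' hx1] by blast
      then have "SRpt x" using hf(3)[OF x] by simp
      then show False using odd_not_SR[OF x \<open>odd x\<close>] by blast
    qed
  next
    assume ex: "even x"
    show "even (h x)"
    proof (rule ccontr)
      assume "odd (h x)"
      have "SRpt (h x)" using SR_homeo[OF hg x even_SR[OF x ex]] .
      then show False using odd_not_SR[OF hx1 \<open>odd (h x)\<close>] by blast
    qed
  qed
qed

lemma sum_pow_parity:
  fixes x :: int
  assumes "odd x"
  shows "odd (\<Sum>i<m. x ^ i) \<longleftrightarrow> odd m"
proof (induction m)
  case 0 then show ?case by simp
next
  case (Suc m)
  have "odd (x ^ m)" using assms by simp
  then show ?case using Suc by simp
qed

lemma odd_sq_mod4: "odd (q::nat) \<Longrightarrow> (q * q) mod 4 = 1"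
proof -
  assume "odd q"
  then obtain r where "q = 2 * r + 1" by (auto elim: oddE)
  then have "q * q = 4 * (r * r + r) + 1" by (simp add: algebra_simps)
  then show ?thesis by simp
qed

lemma pow2_mod4: "k \<ge> 2 \<Longrightarrow> (2::nat) ^ k mod 4 = 0"
proof -
  assume "k \<ge> 2"
  then obtain j where "k = j + 2" by (metis add.commute le_add_diff_inverse)
  then have "(2::nat) ^ k = 2 ^ j * 4" by (simp add: power_add)
  then show ?thesis by simp
qed

lemma catalanA:
  fixes p m k :: nat
  assumes p: "prime p" "p > 2" and m: "m \<ge> 2" and e: "p ^ m = 2 ^ k + 1"
  shows "p = 3 \<and> m = 2 \<and> k = 3"
proof (cases "even m")
  case True
  then obtain t where t: "m = 2 * t" by (auto elim: evenE)
  have t1: "t \<ge> 1" using m t by simp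
  define q where "q = p ^ t"
  have "p ^ 1 \<le> p ^ t" using t1 p by (intro power_increasing) auto
  then have q3: "q \<ge> 3" unfolding q_def using p by simp
  have "p ^ m = p ^ t * p ^ t" unfolding t by (simp add: mult_2 power_add)
  then have qq: "q * q = 2 ^ k + 1" using e unfolding q_def by simp
  have fact: "(q - 1) * (q + 1) = 2 ^ k"
  proof -
    have "(q - 1) * (q + 1) = q * q - 1" using q3 by (simp add: algebra_simps diff_mult_distrib)
    then show ?thesis using qq by simp
  qed
  have "(q - 1) dvd 2 ^ k" using fact by (metis dvd_triv_left)
  then obtain a where a: "q - 1 = 2 ^ a" using divides_primepow_nat[OF two_is_prime_nat] by blast
  have "(q + 1) dvd 2 ^ k" using fact by (metis dvd_triv_right)
  then obtain b where b: "q + 1 = 2 ^ b" using divides_primepow_nat[OF two_is_prime_nat] by blast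
  have "b \<ge> 2"
  proof (rule ccontr)
    assume "\<not> b \<ge> 2"
    then have "b \<le> 1" by simp
    then have "(2::nat) ^ b \<le> 2" by (metis power_increasing power_one_right one_le_numeral)
    then show False using b q3 by simp
  qed
  have "a \<le> 1"
  proof (rule ccontr)
    assume "\<not> a \<le> 1"
    then have "a \<ge> 2" by simp
    then have "(q - 1) mod 4 = 0" using a pow2_mod4 by simp
    moreover have "(q + 1) mod 4 = 0" using b pow2_mod4 \<open>b \<ge> 2\<close> by simp
    ultimately show False using q3 by presburger
  qed
  then have "(2::nat) ^ a \<le> 2" by (metis power_increasing power_one_right one_le_numeral)
  then have "q = 3" using a q3 by simp
  have "t = 1"
  proof (rule ccontr)
    assume "t \<noteq> 1"
    then have "t \<ge> 2" using t1 by simp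
    then have "p ^ 2 \<le> p ^ t" using p by (simp add: power_increasing)
    moreover have "p * p \<ge> 3 * 3" using p by (intro mult_le_mono) auto
    then have "p ^ 2 \<ge> 9" by (simp add: power2_eq_square)
    ultimately show False using \<open>q = 3\<close> unfolding q_def by simp
  qed
  then have "p = 3" using \<open>q = 3\<close> unfolding q_def by simp
  moreover have "m = 2" using t \<open>t = 1\<close> by simp
  moreover have "(2::nat) ^ k = 2 ^ 3" using e \<open>p = 3\<close> \<open>m = 2\<close> by simp
  then have "k = 3" by (metis power_inject_exp one_less_numeral_iff semiring_norm(76))
  ultimately show ?thesis by simp
next
  case False
  define S where "S = (\<Sum>i<m. p ^ i)"
  have "int (p ^ m) - 1 = (int p - 1) * (\<Sum>i<m. int p ^ i)"
    using power_diff_1_eq[of "int p" m] by simp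
  moreover have "int (p ^ m) - 1 = int (2 ^ k)" using e by simp
  moreover have "(\<Sum>i<m. int p ^ i) = int S" unfolding S_def by simp
  ultimately have "int (2 ^ k) = int (p - 1) * int S" using p by (simp add: of_nat_diff)
  then have eqn: "2 ^ k = (p - 1) * S" by (metis of_nat_eq_iff of_nat_mult)
  then have "S dvd 2 ^ k" by simp
  then obtain i where i: "S = 2 ^ i" using divides_primepow_nat[OF two_is_prime_nat] by blast
  have "odd (int p)" using p prime_odd_nat by auto
  then have "odd (\<Sum>i<m. int p ^ i)" using sum_pow_parity False by blast
  then have "odd S" using \<open>(\<Sum>i<m. int p ^ i) = int S\<close> by simp
  then have "i = 0" using i by (cases i) auto
  then have "S = 1" using i by simp
  moreover have "S \<ge> 1 + p"
  proof -
    have "{0, 1} \<subseteq> {..<m}" using m by auto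
    then have "(\<Sum>i\<in>{0,1}. p ^ i) \<le> S" unfolding S_def by (intro sum_mono2) auto
    then show ?thesis by simp
  qed
  ultimately show ?thesis using p by simp
qed

lemma catalanB:
  fixes p m k :: nat
  assumes p: "prime p" "p > 2" and m: "m \<ge> 2" and e: "p ^ m + 1 = 2 ^ k"
  shows False
proof (cases "even m")
  case True
  then obtain t where t: "m = 2 * t" by (auto elim: evenE)
  define q where "q = p ^ t"
  have oq: "odd q" unfolding q_def using p prime_odd_nat by simp
  have "p ^ m = p ^ t * p ^ t" unfolding t by (simp add: mult_2 power_add)
  then have qq: "q * q + 1 = 2 ^ k" using e unfolding q_def by simp
  then have "(2::nat) ^ k mod 4 = 2" using odd_sq_mod4[OF oq] by presburger
  moreover have "k \<ge> 2"
  proof (rule ccontr)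
    assume "\<not> k \<ge> 2"
    then have "k \<le> 1" by simp
    then have "(2::nat) ^ k \<le> 2" by (metis power_increasing power_one_right one_le_numeral)
    moreover have "p ^ 1 \<le> p ^ m" using m p by (intro power_increasing) auto
    then have "p ^ m \<ge> 3" using p by simp
    ultimately show False using e by simp
  qed
  ultimately show False using pow2_mod4 by simp
next
  case False
  define S where "S = (\<Sum>i<m. (- int p) ^ i)"
  have "(- int p) ^ m - 1 = (- int p - 1) * S" unfolding S_def by (rule power_diff_1_eq)
  moreover have "(- int p) ^ m = - (int p ^ m)" using False by simp
  ultimately have "int p ^ m + 1 = (int p + 1) * S" by (simp add: algebra_simps)
  then have e2: "int (2 ^ k) = int (p + 1) * S" using e by (metis of_nat_add of_nat_power of_nat_1)
  have Spos: "S > 0"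
  proof (rule ccontr)
    assume "\<not> S > 0"
    then have "int (p + 1) * S \<le> 0" by (simp add: mult_nonneg_nonpos)
    moreover have "int (2 ^ k) > 0" by simp
    ultimately show False using e2 by linarith
  qed
  define S' where "S' = nat S"
  have "2 ^ k = (p + 1) * S'" using e2 Spos unfolding S'_def by (metis int_nat_eq nat_int of_nat_mult less_le)
  then have "S' dvd 2 ^ k" by simp
  then obtain i where i: "S' = 2 ^ i" using divides_primepow_nat[OF two_is_prime_nat] by blast
  have "odd (- int p)" using p prime_odd_nat by auto
  then have "odd S" unfolding S_def using sum_pow_parity False by blast
  then have "odd S'" unfolding S'_def using Spos by (simp add: even_nat_iff)
  then have "i = 0" using i by (cases i) auto
  then have "S' = 1" using i by simp
  then have "2 ^ k = p + 1" using \<open>2 ^ k = (p + 1) * S'\<close> by simp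
  then have "p ^ m = p" using e by simp
  moreover have "p ^ 1 < p ^ m" using m p by (intro power_strict_increasing) auto
  ultimately show False by simp
qed

lemma catalan_small:
  fixes p m k :: nat
  assumes p: "prime p" "p > 2" and m: "m \<ge> 1" and e: "\<bar>int (p ^ m) - int (2 ^ k)\<bar> = 1"
  shows "m = 1 \<or> (p = 3 \<and> m = 2 \<and> k = 3)"
proof (cases "m = 1")
  case True then show ?thesis by simp
next
  case False
  then have m2: "m \<ge> 2" using m by simp
  from e have "p ^ m = 2 ^ k + 1 \<or> p ^ m + 1 = 2 ^ k" by linarith
  then show ?thesis
  proof
    assume "p ^ m = 2 ^ k + 1"
    then show ?thesis using catalanA[OF p m2] by blast
  next
    assume "p ^ m + 1 = 2 ^ k"
    then show ?thesis using catalanB[OF p m2] by blast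
  qed
qed

lemma prime_pres:
  assumes hg: "homeomorphic_maps KT KT h g" and x: "1 \<le> x" and s: "prime s"
  shows "s dvd h x \<longleftrightarrow> s dvd x"
proof (cases "s = 2")
  case True
  then show ?thesis using even_pres[OF hg x] by simp
next
  case False
  then have "s > 2" using s prime_ge_2_nat by (metis le_neq_implies_less)
  then show ?thesis using div_res_pres(1)[OF hg s] x by blast
qed

lemma pow_char:
  fixes y p :: nat
  assumes "1 \<le> y" "prime p" "\<forall>s. prime s \<longrightarrow> (s dvd y \<longleftrightarrow> s = p)"
  shows "\<exists>m\<ge>1. y = p ^ m"
  using assms
proof (induction y rule: less_induct)
  case (less y)
  have "p dvd y" using less.prems(2,3) by blast
  then obtain y' where y': "y = p * y'" by (auto elim: dvdE)
  have "y' \<noteq> 0" using y' less.prems(1) by auto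
  show ?case
  proof (cases "y' = 1")
    case True
    then show ?thesis using y' by (intro exI[of _ 1]) simp
  next
    case False
    have p1: "p > 1" using less.prems(2) prime_gt_1_nat by blast
    have "y' < y" using y' p1 \<open>y' \<noteq> 0\<close> by simp
    have h3: "\<forall>s. prime s \<longrightarrow> (s dvd y' \<longleftrightarrow> s = p)"
    proof (intro allI impI)
      fix s :: nat assume s: "prime s"
      show "s dvd y' \<longleftrightarrow> s = p"
      proof
        assume "s dvd y'"
        then have "s dvd y" using y' by simp
        then show "s = p" using less.prems(3) s by blast
      next
        assume "s = p"
        obtain s0 where s0: "prime s0" "s0 dvd y'" using prime_factor_nat False by blast
        then have "s0 dvd y" using y' by simp
        then have "s0 = p" using less.prems(3) s0(1) by blast
        then show "s dvd y'" using s0(2) \<open>s = p\<close> by simp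
      qed
    qed
    obtain m where m: "m \<ge> 1" "y' = p ^ m"
      using less.IH[OF \<open>y' < y\<close> _ less.prems(2) h3] \<open>y' \<noteq> 0\<close> by (metis One_nat_def Suc_leI neq0_conv)
    then have "y = p ^ (Suc m)" using y' by simp
    then show ?thesis by (intro exI[of _ "Suc m"]) simp
  qed
qed

lemma pow_pres:
  assumes hg: "homeomorphic_maps KT KT h g" and p: "prime p" and n: "n \<ge> 1"
  shows "\<exists>m\<ge>1. h (p ^ n) = p ^ m"
proof -
  note hf = homeo_facts[OF hg]
  have pn: "1 \<le> p ^ n" using p prime_gt_0_nat by (simp add: Suc_le_eq)
  have "\<forall>s. prime s \<longrightarrow> (s dvd h (p ^ n) \<longleftrightarrow> s = p)"
  proof (intro allI impI)
    fix s :: nat assume s: "prime s"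
    have "s dvd h (p ^ n) \<longleftrightarrow> s dvd p ^ n" using prime_pres[OF hg pn s] .
    also have "\<dots> \<longleftrightarrow> s dvd p" using prime_dvd_power_iff[OF s] n by simp
    also have "\<dots> \<longleftrightarrow> s = p" using primes_dvd_imp_eq[OF s p] by auto
    finally show "s dvd h (p ^ n) \<longleftrightarrow> s = p" .
  qed
  then show ?thesis using pow_char[OF hf(5)[OF pn] p] by blast
qed

lemma fm_step:
  assumes hg: "homeomorphic_maps KT KT h g" and p: "prime p" "p > 2" and n: "n \<ge> 1"
    and pn: "\<bar>int p - int (2 ^ n)\<bar> = 1" and hp: "h p = p ^ m" and m: "m \<ge> 1"
  shows "\<exists>k. h (2 ^ n) = 2 ^ k \<and> \<bar>int (p ^ m) - int (2 ^ k)\<bar> = 1"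
proof -
  obtain k where k: "k \<ge> 1" "h (2 ^ n) = 2 ^ k" using pow_pres[OF hg two_is_prime_nat n] by blast
  have "\<bar>int (p ^ m) - int (2 ^ k)\<bar> = 1"
  proof (rule ccontr)
    assume ne: "\<bar>int (p ^ m) - int (2 ^ k)\<bar> \<noteq> 1"
    define D where "D = int (p ^ m) - int (2 ^ k)"
    have oddp: "odd p" using p prime_odd_nat by blast
    have "odd (p ^ m)" using oddp by simp
    moreover have "even ((2::nat) ^ k)" using k(1) by simp
    ultimately have "p ^ m \<noteq> 2 ^ k" by metis
    then have "D \<noteq> 0" unfolding D_def by (metis eq_iff_diff_eq_0 of_nat_eq_iff)
    then have "nat \<bar>D\<bar> \<noteq> 1" using ne unfolding D_def by linarith
    then obtain s where s: "prime s" "s dvd nat \<bar>D\<bar>" using prime_factor_nat by blast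
    then have "int s dvd int (nat \<bar>D\<bar>)" by (simp only: int_dvd_int_iff)
    then have "int s dvd \<bar>D\<bar>" by simp
    then have sD: "int s dvd D" by (simp only: dvd_abs_iff)
    have s2: "s \<noteq> 2"
    proof
      assume "s = 2"
      then have "int 2 dvd int (2 ^ k)" using k(1) by (simp add: dvd_power)
      then have "int 2 dvd int (p ^ m)" using sD \<open>s = 2\<close> unfolding D_def by (metis dvd_add_left_iff diff_add_cancel)
      then have "2 dvd p ^ m" by (metis int_dvd_int_iff)
      then show False using \<open>odd (p ^ m)\<close> by simp
    qed
    have sp: "s \<noteq> p"
    proof
      assume "s = p"
      then have "int s dvd int (p ^ m)" using m by (simp add: dvd_power)
      then have "int s dvd int (2 ^ k)" using sD unfolding D_def by (metis dvd_diff_right_iff dvd_diff)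
      then have "s dvd 2 ^ k" by (metis int_dvd_int_iff)
      then have "s dvd 2" using prime_dvd_power_iff[OF s(1)] k(1) by simp
      then have "s = 2" using primes_dvd_imp_eq[OF s(1) two_is_prime_nat] by blast
      then show False using s2 by simp
    qed
    have s3: "s > 2" using s(1) s2 prime_ge_2_nat by (metis le_neq_implies_less)
    have nsp: "\<not> s dvd p" using primes_dvd_imp_eq[OF s(1) p(1)] sp by blast
    have ns2: "\<not> s dvd 2 ^ n"
    proof
      assume "s dvd 2 ^ n"
      then have "s dvd 2" using prime_dvd_power_iff[OF s(1)] n by simp
      then show False using primes_dvd_imp_eq[OF s(1) two_is_prime_nat] s2 by blast
    qed
    have "1 \<le> p" using p by simp
    moreover have "1 \<le> (2::nat) ^ n" by simp
    ultimately have eqv: "h p mod s = h (2 ^ n) mod s \<longleftrightarrow> p mod s = 2 ^ n mod s"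
      using div_res_pres(2)[OF hg s(1) s3] nsp ns2 by blast
    have "h p mod s = h (2 ^ n) mod s" unfolding hp k(2) using mod_eq_int_dvd sD unfolding D_def by blast
    then have "p mod s = 2 ^ n mod s" using eqv by blast
    then have "int s dvd int p - int (2 ^ n)" using mod_eq_int_dvd by blast
    then have a: "int s dvd \<bar>int p - int (2 ^ n)\<bar>" using dvd_abs_iff by blast
    have "int s dvd int 1" using a[unfolded pn] by simp
    then have "s dvd 1" by (simp only: int_dvd_int_iff)
    then have "s = 1" by simp
    then show False using s(1) by simp
  qed
  then show ?thesis using k(2) by blast
qed

theorem lemma3p19:
  fixes p :: nat and h :: "nat \<Rightarrow> nat"
  assumes "prime p" and "odd p"
    and "homeomorphic_map kirch_topology kirch_topology h"
  shows "(fermat_prime p \<or> mersenne_prime p \<longrightarrow> h p = p)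
    \<and> (\<not> fermat_prime p \<and> \<not> mersenne_prime p \<longrightarrow>
         h ` {p ^ n | n. n \<ge> 1} = {p ^ n | n. n \<ge> 1})"
proof -
  obtain g where hg: "homeomorphic_maps KT KT h g" using assms(3) homeomorphic_map_maps by blast
  note hf = homeo_facts[OF hg]
  have hg': "homeomorphic_maps KT KT g h" using hg homeomorphic_maps_sym by blast
  have p2: "p > 2" using assms(1,2) prime_ge_2_nat by (metis le_neq_implies_less even_numeral)
  have img: "h ` {p ^ n | n. n \<ge> 1} = {p ^ n | n. n \<ge> 1}"
  proof
    show "h ` {p ^ n | n. n \<ge> 1} \<subseteq> {p ^ n | n. n \<ge> 1}"
    proof
      fix y assume "y \<in> h ` {p ^ n | n. n \<ge> 1}"
      then obtain n where n: "n \<ge> 1" "y = h (p ^ n)" by blast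
      then obtain m where "m \<ge> 1" "h (p ^ n) = p ^ m" using pow_pres[OF hg assms(1)] by blast
      then show "y \<in> {p ^ n | n. n \<ge> 1}" using n by blast
    qed
  next
    show "{p ^ n | n. n \<ge> 1} \<subseteq> h ` {p ^ n | n. n \<ge> 1}"
    proof
      fix y assume "y \<in> {p ^ n | n. n \<ge> 1}"
      then obtain n where n: "n \<ge> 1" "y = p ^ n" by blast
      obtain m where m: "m \<ge> 1" "g (p ^ n) = p ^ m" using pow_pres[OF hg' assms(1) n(1)] by blast
      have "1 \<le> p ^ n" using assms(1) prime_gt_0_nat by (simp add: Suc_le_eq)
      then have "h (g (p ^ n)) = p ^ n" using hf(4) by blast
      then have "y = h (p ^ m)" using n(2) m(2) by simp
      then show "y \<in> h ` {p ^ n | n. n \<ge> 1}" using m(1) by blast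
    qed
  qed
  have fm: "h p = p" if fm: "fermat_prime p \<or> mersenne_prime p"
  proof -
    obtain n where n: "n \<ge> 1" "\<bar>int p - int (2 ^ n)\<bar> = 1"
    proof -
      from fm obtain n where "n \<ge> 1" "p = 2 ^ n + 1 \<or> p = 2 ^ n - 1"
        unfolding fermat_prime_def mersenne_prime_def by blast
      moreover have "(1::nat) \<le> 2 ^ n" by simp
      ultimately have "\<bar>int p - int (2 ^ n)\<bar> = 1" by auto
      then show ?thesis using that \<open>n \<ge> 1\<close> by blast
    qed
    obtain m where m: "m \<ge> 1" "h (p ^ 1) = p ^ m" using pow_pres[OF hg assms(1)] by blast
    have hp: "h p = p ^ m" using m(2) by simp
    obtain k where k: "h (2 ^ n) = 2 ^ k" "\<bar>int (p ^ m) - int (2 ^ k)\<bar> = 1"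
      using fm_step[OF hg assms(1) p2 n hp m(1)] by blast
    have "m = 1 \<or> (p = 3 \<and> m = 2 \<and> k = 3)" using catalan_small[OF assms(1) p2 m(1) k(2)] .
    then show ?thesis
    proof
      assume "m = 1" then show ?thesis using hp by simp
    next
      assume c: "p = 3 \<and> m = 2 \<and> k = 3"
      have e1: "\<bar>int p - int (2 ^ 1)\<bar> = 1" using c by simp
      obtain k1 where k1: "h (2 ^ 1) = 2 ^ k1" "\<bar>int (p ^ m) - int (2 ^ k1)\<bar> = 1"
        using fm_step[OF hg assms(1) p2 _ e1 hp m(1)] by auto
      have "k1 = 3" using catalan_small[OF assms(1) p2 m(1) k1(2)] c by simp
      have e2: "\<bar>int p - int (2 ^ 2)\<bar> = 1" using c by simp
      obtain k2 where k2: "h (2 ^ 2) = 2 ^ k2" "\<bar>int (p ^ m) - int (2 ^ k2)\<bar> = 1"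
        using fm_step[OF hg assms(1) p2 _ e2 hp m(1)] by auto
      have "k2 = 3" using catalan_small[OF assms(1) p2 m(1) k2(2)] c by simp
      have "h 2 = h 4" using k1(1) k2(1) \<open>k1 = 3\<close> \<open>k2 = 3\<close> by simp
      then have "g (h 2) = g (h 4)" by simp
      then have "(2::nat) = 4" using hf(3)[of 2] hf(3)[of 4] by simp
      then show ?thesis by simp
    qed
  qed
  show ?thesis using img fm by blast
qed

end
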